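(* The set $\mathcal M=\{u\in\mathcal N: J'(u)u_1=J'(u)u_2=0,\ u_1\ne0,\ u_2\ne0\}$ is not empty.
   Context: $\Omega_1,\Omega_2\subset\mathbb R^3$ are disjoint bounded open sets with $\mathrm{dist}(\Omega_1,\Omega_2)>0$, $\Omega=\Omega_1\cup\Omega_2$. $M:[0,\infty)\to[0,\infty)$ is $C^1$ with $(M_1)$ $M$ increasing, $M(0)=m_0>0$; $(M_2)$ $t\mapsto M(t)/t$ decreasing on $(0,\infty)$; $\widehat M(t)=\int_0^tM$. $f:\mathbb R\to\mathbb R$ is continuous, $F(s)=\int_0^sf$, with $(f_1)$ $f(s)/s\to0$ as $s\to0$; $(f_2)$ $f(s)/s^5\to0$ as $|s|\to\infty$; $(f_3)$ there is $\theta>4$ with $0<\theta F(s)\le sf(s)$ for $s\ne0$; $(f_4)$ $f(s)/s^3$ increasing on $(0,\infty)$, decreasing on $(-\infty,0)$. On $H^1_0(\Omega)$ with $\|u\|^2=\int_\Omega(|\nabla u|^2+u^2)$, $J(u)=\frac12\widehat M(\|u\|^2)-\int_\Omega F(u)$; $\mathcal N=\{u\in H^1_0(\Omega)\setminus\{0\}:J'(u)u=0\}$; $u_j=u|_{\Omega_j}$ extended by zero, $j=1,2$. *)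

theory Defs
  imports "HOL-Analysis.Analysis"
begin

type_synonym R3 = "real^3"

definition cc1 :: "R3 set \<Rightarrow> (R3 \<Rightarrow> real) \<Rightarrow> (R3 \<Rightarrow> R3) \<Rightarrow> bool" where
  "cc1 U \<phi> g \<longleftrightarrow> continuous_on UNIV g
     \<and> (\<forall>x. (\<phi> has_derivative (\<lambda>h. g x \<bullet> h)) (at x))
     \<and> compact (closure {x. \<phi> x \<noteq> 0}) \<and> closure {x. \<phi> x \<noteq> 0} \<subseteq> U"

definition L2 :: "(R3 \<Rightarrow> real) \<Rightarrow> bool" where
  "L2 u \<longleftrightarrow> u \<in> borel_measurable lebesgue \<and> integrable lebesgue (\<lambda>x. (u x)\<^sup>2)"

definition L2v :: "(R3 \<Rightarrow> R3) \<Rightarrow> bool" where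
  "L2v G \<longleftrightarrow> G \<in> borel_measurable lebesgue \<and> integrable lebesgue (\<lambda>x. (norm (G x))\<^sup>2)"

definition is_weak_grad :: "(R3 \<Rightarrow> real) \<Rightarrow> (R3 \<Rightarrow> R3) \<Rightarrow> bool" where
  "is_weak_grad u G \<longleftrightarrow> L2v G \<and>
     (\<forall>\<phi> g. cc1 UNIV \<phi> g \<longrightarrow>
        (\<forall>i. (\<integral>x. u x * (g x $ i) \<partial>lebesgue) = - (\<integral>x. (G x $ i) * \<phi> x \<partial>lebesgue)))"

definition wgrad :: "(R3 \<Rightarrow> real) \<Rightarrow> (R3 \<Rightarrow> R3)" where
  "wgrad u = (SOME G. is_weak_grad u G)"

text \<open>H^1_0(Omega): closure of C_c^1(Omega) in the H^1 norm (functions extended by zero to R^3).\<close>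
definition H10 :: "R3 set \<Rightarrow> (R3 \<Rightarrow> real) set" where
  "H10 \<Omega> = {u. L2 u \<and> (\<exists>G. is_weak_grad u G \<and>
      (\<exists>\<phi> g. (\<forall>n. cc1 \<Omega> (\<phi> n) (g n))
         \<and> (\<lambda>n. \<integral>x. (\<phi> n x - u x)\<^sup>2 \<partial>lebesgue) \<longlonglongrightarrow> 0
         \<and> (\<lambda>n. \<integral>x. (norm (g n x - G x))\<^sup>2 \<partial>lebesgue) \<longlonglongrightarrow> 0))}"

definition h1norm2 :: "(R3 \<Rightarrow> real) \<Rightarrow> real" where
  "h1norm2 u = (\<integral>x. (norm (wgrad u x))\<^sup>2 + (u x)\<^sup>2 \<partial>lebesgue)"

definition Jfun :: "(real \<Rightarrow> real) \<Rightarrow> (real \<Rightarrow> real) \<Rightarrow> (R3 \<Rightarrow> real) \<Rightarrow> real" where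
  "Jfun Mhat F u = Mhat (h1norm2 u) / 2 - (\<integral>x. F (u x) \<partial>lebesgue)"

text \<open>J'(u)v = 0, expressed via the (Gateaux) derivative of t \<mapsto> J(u + t v) at t = 0.\<close>
definition dJ_zero :: "(real \<Rightarrow> real) \<Rightarrow> (real \<Rightarrow> real) \<Rightarrow> (R3 \<Rightarrow> real) \<Rightarrow> (R3 \<Rightarrow> real) \<Rightarrow> bool" where
  "dJ_zero Mhat F u v \<longleftrightarrow> ((\<lambda>t. Jfun Mhat F (\<lambda>x. u x + t * v x)) has_real_derivative 0) (at 0)"

definition nonzero :: "(R3 \<Rightarrow> real) \<Rightarrow> bool" where
  "nonzero u \<longleftrightarrow> \<not> (AE x in lebesgue. u x = 0)"

definition nehari :: "R3 set \<Rightarrow> (real \<Rightarrow> real) \<Rightarrow> (real \<Rightarrow> real) \<Rightarrow> (R3 \<Rightarrow> real) set" where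
  "nehari \<Omega> Mhat F = {u \<in> H10 \<Omega>. nonzero u \<and> dJ_zero Mhat F u u}"

definition restr :: "R3 set \<Rightarrow> (R3 \<Rightarrow> real) \<Rightarrow> (R3 \<Rightarrow> real)" where
  "restr A u = (\<lambda>x. indicator A x * u x)"

definition Mset :: "R3 set \<Rightarrow> R3 set \<Rightarrow> (real \<Rightarrow> real) \<Rightarrow> (real \<Rightarrow> real) \<Rightarrow> (R3 \<Rightarrow> real) set" where
  "Mset \<Omega>1 \<Omega>2 Mhat F = {u \<in> nehari (\<Omega>1 \<union> \<Omega>2) Mhat F.
      dJ_zero Mhat F u (restr \<Omega>1 u) \<and> dJ_zero Mhat F u (restr \<Omega>2 u)
      \<and> nonzero (restr \<Omega>1 u) \<and> nonzero (restr \<Omega>2 u)}"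

end

theory Submission
  imports Defs
begin

definition hh :: "real \<Rightarrow> real" where "hh y = (max 0 y)^2"

lemma hh_deriv: "(hh has_real_derivative (2 * max 0 y)) (at y)"
proof (cases "y = 0")
  case True
  have "((\<lambda>z. (hh z - hh 0) / (z - 0)) \<longlongrightarrow> 0) (at 0)"
  proof (rule tendsto_sandwich[where f="\<lambda>z. - \<bar>z\<bar>" and h="\<lambda>z. \<bar>z\<bar>"])
    show "\<forall>\<^sub>F z in at 0. - \<bar>z\<bar> \<le> (hh z - hh 0) / (z - 0)"
      by (auto simp: hh_def max_def power2_eq_square intro!: always_eventually)
    show "\<forall>\<^sub>F z in at 0. (hh z - hh 0) / (z - 0) \<le> \<bar>z\<bar>"
      by (auto simp: hh_def max_def power2_eq_square intro!: always_eventually)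
    show "((\<lambda>z. - \<bar>z\<bar>) \<longlongrightarrow> 0) (at (0::real))" "((\<lambda>z. \<bar>z\<bar>) \<longlongrightarrow> 0) (at (0::real))"
      by (auto intro!: tendsto_eq_intros)
  qed
  then show ?thesis using True by (simp add: has_field_derivative_iff)
next
  case False
  show ?thesis
  proof (cases "y > 0")
    case True
    have "((\<lambda>z. z^2) has_real_derivative 2 * y) (at y)"
      by (auto intro!: derivative_eq_intros)
    then show ?thesis using True
      by (rule_tac has_field_derivative_transform_within_open[where S="{0<..}"]) (auto simp: hh_def)
  next
    case False2: False
    have "((\<lambda>z. 0) has_real_derivative 0) (at y)"
      by (auto intro!: derivative_eq_intros)
    then show ?thesis using False False2
      by (rule_tac has_field_derivative_transform_within_open[where S="{..<0}"]) (auto simp: hh_def)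
  qed
qed

definition c1g :: "(R3 \<Rightarrow> real) \<Rightarrow> (R3 \<Rightarrow> R3) \<Rightarrow> bool" where
  "c1g \<phi> g \<longleftrightarrow> continuous_on UNIV g \<and> (\<forall>x. (\<phi> has_derivative (\<lambda>h. g x \<bullet> h)) (at x))"

lemma c1g_cont: "c1g \<phi> g \<Longrightarrow> continuous_on UNIV \<phi>"
  unfolding c1g_def
  by (intro continuous_at_imp_continuous_on ballI) (auto intro: has_derivative_continuous)

lemma c1g_const: "c1g (\<lambda>x. c) (\<lambda>x. 0)"
  by (auto simp: c1g_def intro!: derivative_eq_intros)

lemma c1g_inner: "c1g (\<lambda>x. v \<bullet> x) (\<lambda>x. v)"
  by (auto simp: c1g_def intro!: derivative_eq_intros)

lemma c1g_add: "c1g \<phi> g \<Longrightarrow> c1g \<psi> k \<Longrightarrow> c1g (\<lambda>x. \<phi> x + \<psi> x) (\<lambda>x. g x + k x)"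
  by (auto simp: c1g_def inner_add_left intro!: derivative_eq_intros continuous_intros)

lemma c1g_scale: "c1g \<phi> g \<Longrightarrow> c1g (\<lambda>x. c * \<phi> x) (\<lambda>x. c *\<^sub>R g x)"
  by (auto simp: c1g_def intro!: derivative_eq_intros continuous_intros)

lemma c1g_mult: "c1g \<phi> g \<Longrightarrow> c1g \<psi> k \<Longrightarrow> c1g (\<lambda>x. \<phi> x * \<psi> x) (\<lambda>x. \<phi> x *\<^sub>R k x + \<psi> x *\<^sub>R g x)"
proof -
  assume a: "c1g \<phi> g" "c1g \<psi> k"
  have c: "continuous_on UNIV \<phi>" "continuous_on UNIV \<psi>" using a by (auto intro: c1g_cont)
  show ?thesis using a c
    unfolding c1g_def
    by (auto simp: inner_add_left inner_scaleR_left algebra_simps intro!: derivative_eq_intros continuous_intros)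
qed

lemma c1g_comp:
  assumes s: "\<And>y. (s has_real_derivative s' y) (at y)" and s': "continuous_on UNIV s'"
    and a: "c1g \<phi> g"
  shows "c1g (\<lambda>x. s (\<phi> x)) (\<lambda>x. s' (\<phi> x) *\<^sub>R g x)"
proof -
  have c: "continuous_on UNIV \<phi>" using a by (auto intro: c1g_cont)
  have "continuous_on UNIV (\<lambda>x. s' (\<phi> x) *\<^sub>R g x)"
    using a c s' unfolding c1g_def
    by (intro continuous_intros continuous_on_compose2[OF s']) auto
  moreover have "((\<lambda>x. s (\<phi> x)) has_derivative (\<lambda>h. (s' (\<phi> x) *\<^sub>R g x) \<bullet> h)) (at x)" for x
  proof -
    have d1: "(\<phi> has_derivative (\<lambda>h. g x \<bullet> h)) (at x)" using a by (auto simp: c1g_def)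
    have d2: "(s has_derivative (\<lambda>h. s' (\<phi> x) * h)) (at (\<phi> x))"
      using s[of "\<phi> x"] by (simp add: has_field_derivative_def)
    have "((\<lambda>x. s (\<phi> x)) has_derivative (\<lambda>h. s' (\<phi> x) * (g x \<bullet> h))) (at x)"
      using diff_chain_at[OF d1 d2] by (simp add: comp_def)
    then show ?thesis by simp
  qed
  ultimately show ?thesis unfolding c1g_def by blast
qed

lemma c1g_transl: "c1g \<phi> g \<Longrightarrow> c1g (\<lambda>x. \<phi> (x + d)) (\<lambda>x. g (x + d))"
proof -
  assume a: "c1g \<phi> g"
  have "((\<lambda>x. \<phi> (x + d)) has_derivative (\<lambda>h. g (x + d) \<bullet> h)) (at x)" for x
  proof -
    have "((\<lambda>x. x + d) has_derivative (\<lambda>h. h)) (at x)" by (auto intro!: derivative_eq_intros)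
    moreover have "(\<phi> has_derivative (\<lambda>h. g (x + d) \<bullet> h)) (at (x + d))" using a by (auto simp: c1g_def)
    ultimately show ?thesis using diff_chain_at[of "\<lambda>x. x + d" "\<lambda>h. h" x \<phi>] by (simp add: comp_def)
  qed
  moreover have "continuous_on UNIV (\<lambda>x. g (x + d))"
  proof -
    have "continuous_on UNIV (\<lambda>x. x + d)" by (intro continuous_intros)
    then show ?thesis using a unfolding c1g_def by (auto intro: continuous_on_compose2)
  qed
  ultimately show ?thesis by (auto simp: c1g_def)
qed

lemma c1g_normsq: "c1g (\<lambda>x. (x - c) \<bullet> (x - c)) (\<lambda>x. 2 *\<^sub>R (x - c))"
  by (auto simp: c1g_def inner_commute algebra_simps intro!: derivative_eq_intros continuous_intros)

lemma cont_meas: "continuous_on UNIV (f::R3\<Rightarrow>real) \<Longrightarrow> f \<in> borel_measurable lebesgue"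
  by (intro measurable_completion) (simp add: borel_measurable_continuous_onI)

lemma cont_meas_v: "continuous_on UNIV (f::R3\<Rightarrow>R3) \<Longrightarrow> f \<in> borel_measurable lebesgue"
  by (intro measurable_completion) (simp add: borel_measurable_continuous_onI)

lemma integ_cs:
  fixes \<phi> :: "R3 \<Rightarrow> real"
  assumes c: "continuous_on UNIV \<phi>" and K: "compact K" and z: "\<And>x. x \<notin> K \<Longrightarrow> \<phi> x = 0"
  shows "integrable lebesgue \<phi>"
proof -
  have eq: "\<phi> = (\<lambda>x. indicator K x *\<^sub>R \<phi> x)"
    using z by (auto simp: indicator_def fun_eq_iff)
  have "integrable lborel (\<lambda>x. indicator K x *\<^sub>R \<phi> x)"
    by (rule borel_integrable_compact[OF K]) (rule continuous_on_subset[OF c], auto)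
  then have "integrable lborel \<phi>" using eq by simp
  moreover have "\<phi> \<in> borel_measurable lborel"
    using c by (simp add: borel_measurable_continuous_onI)
  ultimately show ?thesis by (simp add: integrable_completion)
qed

lemma integ_indicator_compact:
  "compact (K::R3 set) \<Longrightarrow> integrable lebesgue (indicator K :: R3 \<Rightarrow> real)"
proof -
  assume K: "compact K"
  then have "K \<in> sets lborel" by (simp add: compact_imp_closed borel_closed)
  moreover have "emeasure lborel K < \<infinity>"
    using K by (intro emeasure_bounded_finite compact_imp_bounded)
  ultimately have "integrable lborel (indicator K :: R3 \<Rightarrow> real)"
    by (rule integrable_real_indicator)
  moreover have "(indicator K :: R3 \<Rightarrow> real) \<in> borel_measurable lborel"
    using \<open>K \<in> sets lborel\<close> by simp
  ultimately show ?thesis by (simp add: integrable_completion)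
qed

lemma integral_transl:
  fixes f :: "R3 \<Rightarrow> real"
  assumes f: "f \<in> borel_measurable borel"
  shows "(\<integral>x. f (x + d) \<partial>lebesgue) = (\<integral>x. f x \<partial>lebesgue)"
proof -
  have f2: "(\<lambda>x. f (x + d)) \<in> borel_measurable borel" using f by measurable
  have "(\<integral>x. f x \<partial>lebesgue) = (\<integral>x. f x \<partial>lborel)"
    using f by (simp add: integral_completion)
  also have "\<dots> = (\<integral>x. f x \<partial>(distr lborel borel ((+) d)))" by (simp add: lborel_distr_plus)
  also have "\<dots> = (\<integral>x. f (d + x) \<partial>lborel)" using f by (simp add: integral_distr)
  also have "\<dots> = (\<integral>x. f (x + d) \<partial>lborel)" by (simp add: add.commute)
  also have "\<dots> = (\<integral>x. f (x + d) \<partial>lebesgue)" using f2 by (simp add: integral_completion)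
  finally show ?thesis ..
qed

lemma mvt_abs:
  fixes f :: "real \<Rightarrow> real"
  assumes d: "\<And>t. (f has_real_derivative f' t) (at t)"
    and b: "\<And>t. min a c \<le> t \<Longrightarrow> t \<le> max a c \<Longrightarrow> \<bar>f' t\<bar> \<le> B"
  shows "\<bar>f c - f a\<bar> \<le> B * \<bar>c - a\<bar>"
proof (cases a c rule: linorder_cases)
  case less
  then obtain z where z: "a < z" "z < c" "f c - f a = (c - a) * f' z"
    using MVT2[of a c f f'] d by blast
  have "\<bar>f' z\<bar> \<le> B" using b z less by auto
  then show ?thesis using z less by (simp add: abs_mult mult.commute mult_left_mono)
next
  case greater
  then obtain z where z: "c < z" "z < a" "f a - f c = (a - c) * f' z"
    using MVT2[of c a f f'] d by blast
  have "\<bar>f' z\<bar> \<le> B" using b z greater by auto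
  then have "\<bar>f a - f c\<bar> \<le> B * \<bar>a - c\<bar>" using z greater by (simp add: abs_mult mult.commute mult_left_mono)
  then show ?thesis by (simp add: abs_minus_commute)
qed simp

lemma deriv_under_integral:
  fixes P P' :: "real \<Rightarrow> R3 \<Rightarrow> real"
  assumes K: "compact K"
    and deriv: "\<And>r x. ((\<lambda>r. P r x) has_real_derivative P' r x) (at r)"
    and bnd: "\<And>r x. r \<in> {r0-1..r0+1} \<Longrightarrow> \<bar>P' r x\<bar> \<le> B"
    and zero: "\<And>r x. r \<in> {r0-1..r0+1} \<Longrightarrow> x \<notin> K \<Longrightarrow> P r x = 0"
    and int: "\<And>r. r \<in> {r0-1..r0+1} \<Longrightarrow> integrable lebesgue (P r)"
    and meas: "P' r0 \<in> borel_measurable lebesgue"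
  shows "((\<lambda>r. \<integral>x. P r x \<partial>lebesgue) has_real_derivative (\<integral>x. P' r0 x \<partial>lebesgue)) (at r0)"
proof -
  let ?\<Phi> = "\<lambda>r. \<integral>x. P r x \<partial>lebesgue"
  have "((\<lambda>r. (?\<Phi> r - ?\<Phi> r0) / (r - r0)) \<longlongrightarrow> (\<integral>x. P' r0 x \<partial>lebesgue)) (at r0)"
    unfolding tendsto_at_iff_sequentially
  proof (intro allI impI)
    fix X :: "nat \<Rightarrow> real"
    assume X: "\<forall>i. X i \<in> UNIV - {r0}" and Xl: "X \<longlonglongrightarrow> r0"
    obtain N where N: "\<And>n. n \<ge> N \<Longrightarrow> dist (X n) r0 < 1"
      using Xl unfolding lim_sequentially by (meson zero_less_one)
    define Y where "Y n = X (n + N)" for n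
    have YX: "Y i \<noteq> r0" "Y i \<in> {r0-1..r0+1}" for i
      using X N[of "i + N"] by (auto simp: Y_def dist_real_def)
    have Yl: "Y \<longlonglongrightarrow> r0" unfolding Y_def by (rule LIMSEQ_ignore_initial_segment[OF Xl])
    define q where "q i x = (P (Y i) x - P r0 x) / (Y i - r0)" for i x
    have r0in: "r0 \<in> {r0-1..r0+1}" by simp
    have eqi: "(?\<Phi> (Y i) - ?\<Phi> r0) / (Y i - r0) = (\<integral>x. q i x \<partial>lebesgue)" for i
    proof -
      have "?\<Phi> (Y i) - ?\<Phi> r0 = (\<integral>x. P (Y i) x - P r0 x \<partial>lebesgue)"
        using int[OF YX(2)] int[OF r0in] by (rule Bochner_Integration.integral_diff[symmetric])
      then show ?thesis unfolding q_def by (simp add: integral_divide_zero)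
    qed
    have "(\<lambda>i. \<integral>x. q i x \<partial>lebesgue) \<longlonglongrightarrow> (\<integral>x. P' r0 x \<partial>lebesgue)"
    proof (rule integral_dominated_convergence[where w="\<lambda>x. B * indicator K x"])
      show "P' r0 \<in> borel_measurable lebesgue" by (rule meas)
      show "q i \<in> borel_measurable lebesgue" for i
      proof -
        have m1: "P (Y i) \<in> borel_measurable lebesgue" using int[OF YX(2)] by (rule borel_measurable_integrable)
        have m2: "P r0 \<in> borel_measurable lebesgue" using int[OF r0in] by (rule borel_measurable_integrable)
        show ?thesis unfolding q_def
          by (intro borel_measurable_divide borel_measurable_diff m1 m2 borel_measurable_const)
      qed
      show "integrable lebesgue (\<lambda>x. B * indicator K x)"
        using integ_indicator_compact[OF K] by simp
      show "AE x in lebesgue. (\<lambda>i. q i x) \<longlonglongrightarrow> P' r0 x"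
      proof (rule AE_I2)
        fix x
        have "((\<lambda>r. (P r x - P r0 x) / (r - r0)) \<longlongrightarrow> P' r0 x) (at r0)"
          using deriv[of x r0] by (simp add: has_field_derivative_iff)
        then have "((\<lambda>r. (P r x - P r0 x) / (r - r0)) \<circ> Y) \<longlonglongrightarrow> P' r0 x"
          unfolding tendsto_at_iff_sequentially using YX Yl by auto
        then show "(\<lambda>i. q i x) \<longlonglongrightarrow> P' r0 x" by (simp add: q_def comp_def)
      qed
      show "AE x in lebesgue. norm (q i x) \<le> B * indicator K x" for i
      proof (rule AE_I2)
        fix x
        show "norm (q i x) \<le> B * indicator K x"
        proof (cases "x \<in> K")
          case False
          then show ?thesis using zero[OF YX(2) False] zero[OF r0in False] by (simp add: q_def)
        next
          case True
          have "\<bar>P (Y i) x - P r0 x\<bar> \<le> B * \<bar>Y i - r0\<bar>"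
          proof (rule mvt_abs[where f'="\<lambda>r. P' r x"])
            show "((\<lambda>r. P r x) has_real_derivative P' t x) (at t)" for t by (rule deriv)
            show "\<bar>P' t x\<bar> \<le> B" if "min r0 (Y i) \<le> t" "t \<le> max r0 (Y i)" for t
              using that YX(2)[of i] by (intro bnd) auto
          qed
          then show ?thesis using True YX(1)[of i]
            by (simp add: q_def abs_divide divide_le_eq)
        qed
      qed
    qed
    then have "(\<lambda>i. (?\<Phi> (Y i) - ?\<Phi> r0) / (Y i - r0)) \<longlonglongrightarrow> (\<integral>x. P' r0 x \<partial>lebesgue)"
      by (simp only: eqi)
    then have "(\<lambda>i. (?\<Phi> (X (i + N)) - ?\<Phi> r0) / (X (i + N) - r0)) \<longlonglongrightarrow> (\<integral>x. P' r0 x \<partial>lebesgue)"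
      by (simp only: Y_def)
    then have "(\<lambda>i. (?\<Phi> (X i) - ?\<Phi> r0) / (X i - r0)) \<longlonglongrightarrow> (\<integral>x. P' r0 x \<partial>lebesgue)"
      by (rule LIMSEQ_offset)
    then show "((\<lambda>r. (?\<Phi> r - ?\<Phi> r0) / (r - r0)) \<circ> X) \<longlonglongrightarrow> (\<integral>x. P' r0 x \<partial>lebesgue)"
      by (simp only: comp_def)
  qed
  then show ?thesis by (simp add: has_field_derivative_iff)
qed

lemma cc1_intro:
  assumes "c1g \<phi> g" "compact K" "K \<subseteq> U" "\<And>x. x \<notin> K \<Longrightarrow> \<phi> x = 0"
  shows "cc1 U \<phi> g"
proof -
  have sub: "closure {x. \<phi> x \<noteq> 0} \<subseteq> K"
    using assms(2,4) by (intro closure_minimal) (auto intro: compact_imp_closed)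
  have "compact (closure {x. \<phi> x \<noteq> 0})"
    using sub assms(2) by (meson bounded_subset closed_closure compact_eq_bounded_closed)
  then show ?thesis using assms sub unfolding cc1_def c1g_def by auto
qed

lemma cc1_c1g: "cc1 U \<phi> g \<Longrightarrow> c1g \<phi> g"
  by (simp add: cc1_def c1g_def)

lemma cc1_zero: "cc1 U \<phi> g \<Longrightarrow> x \<notin> closure {x. \<phi> x \<noteq> 0} \<Longrightarrow> \<phi> x = 0"
  using closure_subset[of "{x. \<phi> x \<noteq> 0}"] by auto

lemma cc1_grad_zero:
  assumes a: "cc1 U \<phi> g" and x: "x \<notin> closure {x. \<phi> x \<noteq> 0}"
  shows "g x = 0"
proof -
  let ?V = "- closure {x. \<phi> x \<noteq> 0}"
  have d: "(\<phi> has_derivative (\<lambda>h. g x \<bullet> h)) (at x)" using a by (simp add: cc1_def)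
  have "((\<lambda>y. 0) has_derivative (\<lambda>h. 0)) (at x)" by simp
  then have "(\<phi> has_derivative (\<lambda>h. 0)) (at x)"
    by (rule has_derivative_transform_within_open[where s="?V"]) (use x in \<open>auto intro: cc1_zero[OF a]\<close>)
  with d have "(\<lambda>h. g x \<bullet> h) = (\<lambda>h. 0)" by (rule has_derivative_unique)
  then have "g x \<bullet> g x = 0" by metis
  then show ?thesis by simp
qed

lemma cc1_grad_bounded:
  assumes a: "cc1 U \<phi> g"
  obtains B where "\<And>x. norm (g x) \<le> B"
proof -
  let ?S = "closure {x. \<phi> x \<noteq> 0}"
  have "compact ?S" "continuous_on UNIV g" using a by (auto simp: cc1_def)
  then have "compact (g ` ?S)" by (meson compact_continuous_image continuous_on_subset top_greatest)
  then obtain B where B: "\<And>y. y \<in> g ` ?S \<Longrightarrow> norm y \<le> B"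
    by (meson bounded_iff compact_imp_bounded)
  have "norm (g x) \<le> max B 0" for x
    using B[of "g x"] cc1_grad_zero[OF a, of x] by (cases "x \<in> ?S") auto
  then show ?thesis by (rule that)
qed

lemma cc1_in_cball:
  assumes a: "cc1 U \<phi> g"
  obtains R where "R \<ge> 0" "closure {x. \<phi> x \<noteq> 0} \<subseteq> cball 0 R"
proof -
  have "bounded (closure {x. \<phi> x \<noteq> 0})" using a by (simp add: cc1_def compact_imp_bounded)
  then obtain R where "\<And>x. x \<in> closure {x. \<phi> x \<noteq> 0} \<Longrightarrow> norm x \<le> R" by (meson bounded_iff)
  then show ?thesis by (intro that[of "max R 0"]) (auto simp: subset_iff intro: max.coboundedI1)
qed

lemma ibp0:
  assumes a: "cc1 UNIV w gw"
  shows "(\<integral>x. gw x $ i \<partial>lebesgue) = 0"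
proof -
  define e :: R3 where "e = axis i 1"
  let ?S = "closure {x. w x \<noteq> 0}"
  obtain R where R: "R \<ge> 0" "?S \<subseteq> cball 0 R" using cc1_in_cball[OF a] by blast
  obtain B where B: "\<And>x. norm (gw x) \<le> B" using cc1_grad_bounded[OF a] by blast
  have ne: "norm e = 1" by (simp add: e_def)
  have c1: "c1g w gw" using a by (rule cc1_c1g)
  have wc: "continuous_on UNIV w" using c1 by (rule c1g_cont)
  have gc: "continuous_on UNIV gw" using c1 by (simp add: c1g_def)
  define P where "P r x = w (x + r *\<^sub>R e)" for r x
  define P' where "P' r x = gw (x + r *\<^sub>R e) \<bullet> e" for r x
  have K: "compact (cball (0::R3) (R + 1))" by simp
  have outside: "w (x + r *\<^sub>R e) = 0" if "r \<in> {0-1..0+1}" "x \<notin> cball 0 (R + 1)" for r x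
  proof -
    have "norm (x + r *\<^sub>R e) \<ge> norm x - norm (r *\<^sub>R e)" using norm_triangle_ineq4[of "x + r *\<^sub>R e" "r *\<^sub>R e"] by simp
    moreover have "norm (r *\<^sub>R e) \<le> 1" using that ne by auto
    moreover have "norm x > R + 1" using that by auto
    ultimately have "x + r *\<^sub>R e \<notin> ?S" using R by auto
    then show ?thesis by (rule cc1_zero[OF a])
  qed
  have deriv: "((\<lambda>r. P r x) has_real_derivative P' r x) (at r)" for r x
  proof -
    have d1: "((\<lambda>r. x + r *\<^sub>R e) has_derivative (\<lambda>t. t *\<^sub>R e)) (at r)"
      by (auto intro!: derivative_eq_intros)
    have d2: "(w has_derivative (\<lambda>h. gw (x + r *\<^sub>R e) \<bullet> h)) (at (x + r *\<^sub>R e))"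
      using c1 by (simp add: c1g_def)
    have "((\<lambda>r. w (x + r *\<^sub>R e)) has_derivative (\<lambda>t. gw (x + r *\<^sub>R e) \<bullet> (t *\<^sub>R e))) (at r)"
      using diff_chain_at[OF d1 d2] by (simp add: comp_def)
    moreover have "(\<lambda>t. gw (x + r *\<^sub>R e) \<bullet> (t *\<^sub>R e)) = (*) (gw (x + r *\<^sub>R e) \<bullet> e)"
      by (auto simp: fun_eq_iff)
    ultimately show ?thesis unfolding P_def P'_def has_field_derivative_def
      by simp
  qed
  have "((\<lambda>r. \<integral>x. P r x \<partial>lebesgue) has_real_derivative (\<integral>x. P' 0 x \<partial>lebesgue)) (at 0)"
  proof (rule deriv_under_integral[OF K deriv, where B=B])
    show "\<bar>P' r x\<bar> \<le> B" for r x
    proof -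
      have "\<bar>P' r x\<bar> \<le> norm (gw (x + r *\<^sub>R e)) * norm e" unfolding P'_def
        by (rule Cauchy_Schwarz_ineq2)
      then show ?thesis using B[of "x + r *\<^sub>R e"] ne by simp
    qed
    show "P r x = 0" if "r \<in> {0-1..0+1}" "x \<notin> cball 0 (R + 1)" for r x
      using outside[OF that] by (simp add: P_def)
    show "integrable lebesgue (P r)" if "r \<in> {0-1..0+1}" for r
      unfolding P_def
    proof (rule integ_cs[OF _ K])
      show "continuous_on UNIV (\<lambda>x. w (x + r *\<^sub>R e))"
        by (rule continuous_on_compose2[OF wc]) (auto intro!: continuous_intros)
      show "w (x + r *\<^sub>R e) = 0" if "x \<notin> cball 0 (R + 1)" for x using outside \<open>r \<in> _\<close> that by blast
    qed
    show "P' 0 \<in> borel_measurable lebesgue"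
      unfolding P'_def using gc by (intro cont_meas) (auto intro!: continuous_intros)
  qed
  moreover have "(\<lambda>r. \<integral>x. P r x \<partial>lebesgue) = (\<lambda>r. \<integral>x. w x \<partial>lebesgue)"
    unfolding P_def using wc by (intro ext integral_transl borel_measurable_continuous_onI)
  ultimately have "((\<lambda>r. \<integral>x. w x \<partial>lebesgue) has_real_derivative (\<integral>x. P' 0 x \<partial>lebesgue)) (at 0)" by simp
  moreover have "((\<lambda>r. \<integral>x. w x \<partial>lebesgue) has_real_derivative 0) (at 0)" by simp
  ultimately have "(\<integral>x. P' 0 x \<partial>lebesgue) = 0" by (rule DERIV_unique)
  moreover have "P' 0 x = gw x $ i" for x by (simp add: P'_def e_def cart_eq_inner_axis)
  ultimately show ?thesis by simp
qed

lemma cc1_integrable: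
  assumes a: "cc1 U \<phi> g" and c: "continuous_on UNIV h" and z: "\<And>x. \<phi> x = 0 \<Longrightarrow> h x = 0"
  shows "integrable lebesgue (h :: R3 \<Rightarrow> real)"
proof (rule integ_cs[OF c])
  show "compact (closure {x. \<phi> x \<noteq> 0})" using a by (simp add: cc1_def)
  show "h x = 0" if "x \<notin> closure {x. \<phi> x \<noteq> 0}" for x using z cc1_zero[OF a that] .
qed

lemma cc1_integrable_g:
  assumes a: "cc1 U \<phi> g" and c: "continuous_on UNIV h" and z: "\<And>x. \<phi> x = 0 \<Longrightarrow> g x = 0 \<Longrightarrow> h x = 0"
  shows "integrable lebesgue (h :: R3 \<Rightarrow> real)"
proof (rule integ_cs[OF c])
  show "compact (closure {x. \<phi> x \<noteq> 0})" using a by (simp add: cc1_def)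
  show "h x = 0" if "x \<notin> closure {x. \<phi> x \<noteq> 0}" for x using z cc1_zero[OF a that] cc1_grad_zero[OF a that] .
qed

lemma weak_grad_cc1:
  assumes a: "cc1 U w gw"
  shows "is_weak_grad w gw"
proof -
  have c1: "c1g w gw" using a by (rule cc1_c1g)
  have wc: "continuous_on UNIV w" using c1 by (rule c1g_cont)
  have gc: "continuous_on UNIV gw" using c1 by (simp add: c1g_def)
  have "L2v gw" unfolding L2v_def
  proof
    show "gw \<in> borel_measurable lebesgue" using gc by (rule cont_meas_v)
    show "integrable lebesgue (\<lambda>x. (norm (gw x))\<^sup>2)"
      by (rule cc1_integrable_g[OF a]) (use gc in \<open>auto intro!: continuous_intros\<close>)
  qed
  moreover have "(\<integral>x. w x * (g x $ i) \<partial>lebesgue) = - (\<integral>x. (gw x $ i) * \<phi> x \<partial>lebesgue)"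
    if t: "cc1 UNIV \<phi> g" for \<phi> g i
  proof -
    have c2: "c1g \<phi> g" using t by (rule cc1_c1g)
    have \<phi>c: "continuous_on UNIV \<phi>" using c2 by (rule c1g_cont)
    have gc2: "continuous_on UNIV g" using c2 by (simp add: c1g_def)
    have p: "cc1 UNIV (\<lambda>x. w x * \<phi> x) (\<lambda>x. w x *\<^sub>R g x + \<phi> x *\<^sub>R gw x)"
    proof (rule cc1_intro[OF c1g_mult[OF c1 c2]])
      show "compact (closure {x. w x \<noteq> 0})" using a by (simp add: cc1_def)
      show "w x * \<phi> x = 0" if "x \<notin> closure {x. w x \<noteq> 0}" for x using cc1_zero[OF a that] by simp
    qed simp
    have "(\<integral>x. (w x *\<^sub>R g x + \<phi> x *\<^sub>R gw x) $ i \<partial>lebesgue) = 0" by (rule ibp0[OF p])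
    then have "(\<integral>x. w x * (g x $ i) + (gw x $ i) * \<phi> x \<partial>lebesgue) = 0" by (simp add: mult.commute)
    moreover have i1: "integrable lebesgue (\<lambda>x. w x * (g x $ i))"
      by (rule cc1_integrable[OF a]) (use wc gc2 in \<open>auto intro!: continuous_intros\<close>)
    moreover have i2: "integrable lebesgue (\<lambda>x. (gw x $ i) * \<phi> x)"
      by (rule cc1_integrable_g[OF a]) (use \<phi>c gc in \<open>auto intro!: continuous_intros\<close>)
    moreover have "(\<integral>x. w x * (g x $ i) + (gw x $ i) * \<phi> x \<partial>lebesgue) =
        (\<integral>x. w x * (g x $ i) \<partial>lebesgue) + (\<integral>x. (gw x $ i) * \<phi> x \<partial>lebesgue)"
      using i1 i2 by (rule Bochner_Integration.integral_add)
    ultimately show ?thesis by linarith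
  qed
  ultimately show ?thesis unfolding is_weak_grad_def by blast
qed

definition hh' :: "real \<Rightarrow> real" where "hh' y = 2 * max 0 y"

lemma hh_deriv': "(hh has_real_derivative hh' y) (at y)"
  unfolding hh'_def by (rule hh_deriv)

lemma hh'_cont: "continuous_on UNIV hh'"
  unfolding hh'_def by (intro continuous_intros)

lemma hh_cont: "continuous_on UNIV hh"
  unfolding hh_def by (intro continuous_intros)

lemma hh_nonneg: "hh y \<ge> 0" by (simp add: hh_def)
lemma hh_pos: "y > 0 \<Longrightarrow> hh y > 0" by (simp add: hh_def)
lemma hh_zero: "y \<le> 0 \<Longrightarrow> hh y = 0" by (simp add: hh_def)

definition ssD :: "real \<Rightarrow> real" where "ssD y = hh y + hh (1 - y)"
definition ss :: "real \<Rightarrow> real" where "ss y = hh y / ssD y"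
definition ss' :: "real \<Rightarrow> real" where
  "ss' y = (hh' y * ssD y - hh y * (hh' y - hh' (1 - y))) / (ssD y)^2"

lemma ssD_pos: "ssD y > 0"
proof (cases "y > 0")
  case True then show ?thesis using hh_pos[of y] hh_nonneg[of "1-y"] by (simp add: ssD_def)
next
  case False then show ?thesis using hh_pos[of "1-y"] hh_nonneg[of y] by (simp add: ssD_def)
qed

lemma ssD_nz[simp]: "ssD y \<noteq> 0"
  using ssD_pos[of y] by linarith

lemma ssD_deriv: "(ssD has_real_derivative (hh' y - hh' (1 - y))) (at y)"
proof -
  have "((\<lambda>y. hh (1 - y)) has_real_derivative hh' (1 - y) * (0 - 1)) (at y)"
    by (rule DERIV_chain2[OF hh_deriv']) (auto intro!: derivative_eq_intros)
  then have "((\<lambda>y. hh y + hh (1 - y)) has_real_derivative hh' y + hh' (1 - y) * (0 - 1)) (at y)"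
    by (intro DERIV_add hh_deriv')
  then show ?thesis unfolding ssD_def[abs_def] by simp
qed

lemma ss_deriv: "(ss has_real_derivative ss' y) (at y)"
proof -
  have "((\<lambda>y. hh y / ssD y) has_real_derivative
     (hh' y * ssD y - hh y * (hh' y - hh' (1 - y))) / (ssD y * ssD y)) (at y)"
    using ssD_pos[of y] by (intro DERIV_divide hh_deriv' ssD_deriv) auto
  then show ?thesis unfolding ss_def[abs_def] ss'_def by (simp add: power2_eq_square)
qed

lemma ssD_cont: "continuous_on UNIV ssD"
  unfolding ssD_def[abs_def]
  by (intro continuous_intros continuous_on_compose2[OF hh_cont] hh_cont) auto

lemma ss'_cont: "continuous_on UNIV ss'"
proof -
  have c1: "continuous_on UNIV (\<lambda>y. hh' (1 - y))"
    by (intro continuous_on_compose2[OF hh'_cont] continuous_intros) auto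
  show ?thesis unfolding ss'_def[abs_def]
    by (intro continuous_intros hh'_cont hh_cont ssD_cont c1) auto
qed

lemma ss_zero: "y \<le> 0 \<Longrightarrow> ss y = 0" by (simp add: ss_def hh_zero)
lemma ss_one: "y \<ge> 1 \<Longrightarrow> ss y = 1"
  using ssD_pos[of y] by (simp add: ss_def ssD_def hh_zero)
lemma ss_nonneg: "ss y \<ge> 0"
  using ssD_pos[of y] hh_nonneg[of y] by (simp add: ss_def)
lemma ss_le1: "ss y \<le> 1"
  using ssD_pos[of y] hh_nonneg[of "1 - y"] by (simp add: ss_def ssD_def)

lemma c1g_prod:
  assumes "finite I" "\<And>i. i \<in> I \<Longrightarrow> c1g (f i) (g i)"
  shows "\<exists>G. c1g (\<lambda>x. \<Prod>i\<in>I. f i x) G"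
  using assms
proof (induction I rule: finite_induct)
  case empty then show ?case using c1g_const[of 1] by auto
next
  case (insert j I)
  then obtain G where G: "c1g (\<lambda>x. \<Prod>i\<in>I. f i x) G" by auto
  have "c1g (\<lambda>x. f j x * (\<Prod>i\<in>I. f i x)) (\<lambda>x. f j x *\<^sub>R G x + (\<Prod>i\<in>I. f i x) *\<^sub>R g j x)"
    using insert G by (intro c1g_mult) auto
  then show ?case using insert by auto
qed

lemma c1g_affine: "c1g (\<lambda>x. c * (v \<bullet> x) + d) (\<lambda>x. c *\<^sub>R v)"
  using c1g_add[OF c1g_scale[OF c1g_inner[of v], of c] c1g_const[of d]] by simp

definition bx :: "nat \<Rightarrow> R3 \<Rightarrow> R3 \<Rightarrow> R3 \<Rightarrow> real" where
  "bx n a b x = (\<Prod>i\<in>UNIV. ss (real n * (x $ i - a $ i)) * ss (real n * (b $ i - x $ i)))"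

lemma c1g_ss_aff: "\<exists>G. c1g (\<lambda>x. ss (c * (x $ i) + d)) G"
proof -
  have "c1g (\<lambda>x. ss (c * (axis i 1 \<bullet> x) + d)) (\<lambda>x. ss' (c * (axis i 1 \<bullet> x) + d) *\<^sub>R (c *\<^sub>R axis i 1))"
    by (rule c1g_comp[OF ss_deriv ss'_cont c1g_affine])
  moreover have "(\<lambda>x. ss (c * (axis i 1 \<bullet> x) + d)) = (\<lambda>x. ss (c * (x $ i) + d))"
    by (simp add: cart_eq_inner_axis inner_commute)
  ultimately show ?thesis by auto
qed

lemma bx_c1g: "\<exists>G. c1g (bx n a b) G"
proof -
  have "\<exists>G. c1g (\<lambda>x. ss (real n * (x $ i - a $ i)) * ss (real n * (b $ i - x $ i))) G" for i
  proof -
    obtain G1 where G1: "c1g (\<lambda>x. ss (real n * (x $ i) + (- real n * a $ i))) G1"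
      using c1g_ss_aff by blast
    obtain G2 where G2: "c1g (\<lambda>x. ss ((- real n) * (x $ i) + real n * b $ i)) G2"
      using c1g_ss_aff by blast
    have eq: "(\<lambda>x. ss (real n * (x $ i) + (- real n * a $ i)) * ss ((- real n) * (x $ i) + real n * b $ i))
       = (\<lambda>x. ss (real n * (x $ i - a $ i)) * ss (real n * (b $ i - x $ i)))"
      by (simp add: algebra_simps)
    show ?thesis using c1g_mult[OF G1 G2] unfolding eq by blast
  qed
  then have "\<forall>i. \<exists>G. c1g (\<lambda>x. ss (real n * (x $ i - a $ i)) * ss (real n * (b $ i - x $ i))) G" by blast
  then obtain G where "\<forall>i. c1g (\<lambda>x. ss (real n * (x $ i - a $ i)) * ss (real n * (b $ i - x $ i))) (G i)"
    by (auto dest: choice)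
  then show ?thesis unfolding bx_def[abs_def] by (intro c1g_prod) auto
qed

lemma bx_zero: "x \<notin> cbox a b \<Longrightarrow> bx n a b x = 0"
proof -
  assume "x \<notin> cbox a b"
  then obtain i where "x $ i < a $ i \<or> b $ i < x $ i" by (auto simp: mem_box_cart not_le)
  then have "ss (real n * (x $ i - a $ i)) * ss (real n * (b $ i - x $ i)) = 0"
    by (auto intro!: ss_zero mult_nonneg_nonpos)
  then show ?thesis unfolding bx_def by (intro prod_zero) auto
qed

lemma bx_cc1: "\<exists>G. cc1 UNIV (bx n a b) G"
  using bx_c1g[of n a b] by (auto intro!: cc1_intro[where K="cbox a b"] bx_zero)

lemma bx_bound: "\<bar>bx n a b x\<bar> \<le> indicator (cbox a b) x"
proof (cases "x \<in> cbox a b")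
  case True
  have "\<bar>bx n a b x\<bar> = (\<Prod>i\<in>UNIV. \<bar>ss (real n * (x $ i - a $ i)) * ss (real n * (b $ i - x $ i))\<bar>)"
    unfolding bx_def by (rule abs_prod)
  also have "\<dots> \<le> (\<Prod>i\<in>(UNIV::3 set). 1)"
    by (intro prod_mono) (auto simp: abs_mult ss_nonneg ss_le1 intro: mult_le_one)
  finally show ?thesis using True by simp
next
  case False then show ?thesis by (simp add: bx_zero)
qed

lemma bx_lim: "(\<lambda>n. bx n a b x) \<longlonglongrightarrow> indicator (box a b) x"
proof (cases "x \<in> box a b")
  case True
  then have pos: "0 < x $ i - a $ i" "0 < b $ i - x $ i" for i by (auto simp: mem_box_cart)
  define m where "m = Min (range (\<lambda>i. min (x $ i - a $ i) (b $ i - x $ i)))"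
  have m_pos: "m > 0" unfolding m_def using pos by (subst Min_gr_iff) auto
  have m_le0: "m \<le> min (x $ i - a $ i) (b $ i - x $ i)" for i
    unfolding m_def by (rule Min_le) auto
  have m_le: "m \<le> x $ i - a $ i" "m \<le> b $ i - x $ i" for i
    using m_le0[of i] by auto
  obtain N :: nat where N: "1 / m < N" using reals_Archimedean2 by blast
  have "bx n a b x = 1" if "n \<ge> N" for n
  proof -
    have "real n * m \<ge> 1"
    proof -
      have "1 < real N * m" using N m_pos by (simp add: divide_less_eq)
      moreover have "real N * m \<le> real n * m" using that m_pos by (simp add: mult_right_mono)
      ultimately show ?thesis by simp
    qed
    then have "real n * (x $ i - a $ i) \<ge> 1" "real n * (b $ i - x $ i) \<ge> 1" for i
      using m_le[of i] by (smt (verit) mult_left_mono of_nat_0_le_iff)+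
    then show ?thesis unfolding bx_def by (simp add: ss_one)
  qed
  then have "eventually (\<lambda>n. bx n a b x = 1) sequentially" by (auto simp: eventually_sequentially)
  then show ?thesis using True by (simp add: tendsto_eventually)
next
  case False
  then obtain i where "x $ i \<le> a $ i \<or> b $ i \<le> x $ i" by (auto simp: mem_box_cart not_less)
  then have "ss (real n * (x $ i - a $ i)) * ss (real n * (b $ i - x $ i)) = 0" for n
    by (auto intro!: ss_zero mult_nonneg_nonpos)
  then have "bx n a b x = 0" for n unfolding bx_def by (intro prod_zero) auto
  then show ?thesis using False by simp
qed

lemma borel_in_leb: "A \<in> sets borel \<Longrightarrow> A \<in> sets (lebesgue :: R3 measure)"
  by (simp add: sets_completionI_sets)

lemma loc_integrable:
  fixes h k :: "R3 \<Rightarrow> real"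
  assumes hm: "h \<in> borel_measurable lebesgue" and h2: "integrable lebesgue (\<lambda>x. (h x)\<^sup>2)"
    and km: "k \<in> borel_measurable lebesgue" and kb: "\<And>x. \<bar>k x\<bar> \<le> B * indicator K x"
    and K: "compact K"
  shows "integrable lebesgue (\<lambda>x. h x * k x)"
proof (rule Bochner_Integration.integrable_bound)
  show "integrable lebesgue (\<lambda>x. max B 0 * ((h x)\<^sup>2 + indicator K x))"
    by (rule integrable_mult_right, rule Bochner_Integration.integrable_add[OF h2 integ_indicator_compact[OF K]])
  show "(\<lambda>x. h x * k x) \<in> borel_measurable lebesgue" using hm km by (rule borel_measurable_times)
  show "AE x in lebesgue. norm (h x * k x) \<le> norm (max B 0 * ((h x)\<^sup>2 + indicator K x))"
  proof (rule AE_I2)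
    fix x
    have hh: "\<bar>h x\<bar> \<le> (h x)\<^sup>2 + 1"
    proof (cases "\<bar>h x\<bar> \<le> 1")
      case True then show ?thesis using zero_le_power2[of "h x"] by linarith
    next
      case False
      then have "\<bar>h x\<bar> * 1 \<le> \<bar>h x\<bar> * \<bar>h x\<bar>" by (intro mult_left_mono) auto
      also have "\<dots> = (h x)\<^sup>2" by (simp add: power2_eq_square abs_mult_self_eq)
      finally show ?thesis by simp
    qed
    show "norm (h x * k x) \<le> norm (max B 0 * ((h x)\<^sup>2 + indicator K x))"
    proof (cases "x \<in> K")
      case True
      have "\<bar>h x * k x\<bar> \<le> \<bar>h x\<bar> * max B 0" using kb[of x] True by (simp add: abs_mult mult_left_mono)
      also have "\<dots> \<le> ((h x)\<^sup>2 + 1) * max B 0" using hh by (simp add: mult_right_mono)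
      finally show ?thesis using True by (simp add: mult.commute)
    next
      case False
      then have "k x = 0" using kb[of x] by simp
      then show ?thesis by simp
    qed
  qed
qed

lemma cc1_test_bounded:
  assumes a: "cc1 U \<psi> g"
  obtains B where "\<And>x. \<bar>\<psi> x\<bar> \<le> B * indicator (closure {x. \<psi> x \<noteq> 0}) x"
proof -
  let ?S = "closure {x. \<psi> x \<noteq> 0}"
  have "compact ?S" using a by (simp add: cc1_def)
  have "continuous_on UNIV \<psi>" using a by (intro c1g_cont cc1_c1g)
  with \<open>compact ?S\<close> have "compact (\<psi> ` ?S)" by (meson compact_continuous_image continuous_on_subset top_greatest)
  then obtain B where B: "\<And>y. y \<in> \<psi> ` ?S \<Longrightarrow> norm y \<le> B"
    by (meson bounded_iff compact_imp_bounded)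
  have "\<bar>\<psi> x\<bar> \<le> B * indicator ?S x" for x
    using B[of "\<psi> x"] cc1_zero[OF a, of x] by (cases "x \<in> ?S") auto
  then show ?thesis by (rule that)
qed

lemma ennreal_neg_eq: "ennreal a = ennreal (- a) \<Longrightarrow> a = 0"
proof -
  assume e: "ennreal a = ennreal (- a)"
  have "ennreal a = 0 \<or> ennreal (- a) = 0" by (cases "a \<ge> 0") (auto simp: ennreal_eq_0_iff)
  then have "ennreal a = 0 \<and> ennreal (- a) = 0" using e by auto
  then show "a = 0" by (auto simp: ennreal_eq_0_iff)
qed

lemma ae_zero_of_tests:
  fixes H :: "R3 \<Rightarrow> real"
  assumes Hm: "H \<in> borel_measurable lebesgue" and H2: "integrable lebesgue (\<lambda>x. (H x)\<^sup>2)"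
    and T: "\<And>\<psi> g. cc1 UNIV \<psi> g \<Longrightarrow> (\<integral>x. H x * \<psi> x \<partial>lebesgue) = 0"
  shows "AE x in lebesgue. H x = 0"
proof -
  have box_leb: "box a b \<in> sets lebesgue" "cbox a b \<in> sets lebesgue" for a b :: R3
    by (auto intro: borel_in_leb)
  have intbox: "integrable lebesgue (\<lambda>x. H x * indicator (box a b) x)" for a b
    by (rule loc_integrable[OF Hm H2 borel_measurable_indicator[OF box_leb(1)] _ compact_cbox[of a b], where B=1])
       (auto split: split_indicator simp: mem_box_cart less_imp_le)
  have box0: "(\<integral>x. H x * indicator (box a b) x \<partial>lebesgue) = 0" for a b
  proof -
    have "(\<lambda>n. \<integral>x. H x * bx n a b x \<partial>lebesgue) \<longlonglongrightarrow> (\<integral>x. H x * indicator (box a b) x \<partial>lebesgue)"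
    proof (rule integral_dominated_convergence[where w="\<lambda>x. \<bar>H x\<bar> * indicator (cbox a b) x"])
      show "(\<lambda>x. H x * indicator (box a b) x) \<in> borel_measurable lebesgue"
        using intbox by (rule borel_measurable_integrable)
      show "(\<lambda>x. H x * bx n a b x) \<in> borel_measurable lebesgue" for n
      proof -
        obtain G where "c1g (bx n a b) G" using bx_c1g by blast
        then have "bx n a b \<in> borel_measurable lebesgue" by (intro cont_meas c1g_cont)
        then show ?thesis using Hm by (rule borel_measurable_times[rotated])
      qed
      show "integrable lebesgue (\<lambda>x. \<bar>H x\<bar> * indicator (cbox a b) x)"
        by (rule loc_integrable[OF borel_measurable_abs[OF Hm] _ borel_measurable_indicator[OF box_leb(2)] _ compact_cbox[of a b], where B=1])
           (use H2 in \<open>auto split: split_indicator\<close>)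
      show "AE x in lebesgue. (\<lambda>n. H x * bx n a b x) \<longlonglongrightarrow> H x * indicator (box a b) x"
        by (intro AE_I2 tendsto_mult_left bx_lim)
      show "AE x in lebesgue. norm (H x * bx n a b x) \<le> \<bar>H x\<bar> * indicator (cbox a b) x" for n
        by (intro AE_I2) (simp add: abs_mult mult_left_mono bx_bound)
    qed
    moreover have "(\<integral>x. H x * bx n a b x \<partial>lebesgue) = 0" for n
      using bx_cc1[of n a b] T by blast
    ultimately have "(\<lambda>n. 0) \<longlonglongrightarrow> (\<integral>x. H x * indicator (box a b) x \<partial>lebesgue)" by simp
    then show ?thesis by (simp add: LIMSEQ_const_iff)
  qed
  obtain H' where H'm: "H' \<in> borel_measurable lborel" and ae: "AE x in lborel. H x = H' x"
    using completion_ex_borel_measurable_real[OF Hm] by blast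
  have H'm2[measurable]: "H' \<in> borel_measurable borel" using H'm by simp
  have ae2: "AE x in lebesgue. H x = H' x" using ae by (rule AE_completion)
  have intbox': "integrable lborel (\<lambda>x. H' x * indicator (box a b) x)"
    and box0': "(\<integral>x. H' x * indicator (box a b) x \<partial>lborel) = 0" for a b
  proof -
    have m: "(\<lambda>x. H' x * indicator (box a b) x) \<in> borel_measurable lborel" by measurable
    have m2: "(\<lambda>x. H' x * indicator (box a b) x) \<in> borel_measurable lebesgue" by (rule measurable_completion[OF m])
    have aeq: "AE x in lebesgue. H x * indicator (box a b) x = H' x * indicator (box a b) x"
      using ae2 by eventually_elim simp
    have "integrable lebesgue (\<lambda>x. H' x * indicator (box a b) x)"
      using intbox[of a b] integrable_cong_AE[OF borel_measurable_integrable[OF intbox] m2 aeq] by simp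
    then show "integrable lborel (\<lambda>x. H' x * indicator (box a b) x)" using m by (simp add: integrable_completion)
    have "(\<integral>x. H' x * indicator (box a b) x \<partial>lborel) = (\<integral>x. H' x * indicator (box a b) x \<partial>lebesgue)"
      using m by (simp add: integral_completion)
    also have "\<dots> = (\<integral>x. H x * indicator (box a b) x \<partial>lebesgue)"
      using integral_cong_AE[OF borel_measurable_integrable[OF intbox] m2 aeq] by simp
    finally show "(\<integral>x. H' x * indicator (box a b) x \<partial>lborel) = 0" using box0 by simp
  qed
  let ?E = "range (\<lambda>(a, b). box a b :: R3 set)"
  let ?A = "\<lambda>n::nat. box (- (real n *\<^sub>R One)) (real n *\<^sub>R One) :: R3 set"
  have emb: "emeasure (density lborel (\<lambda>x. ennreal (H' x))) (box a b) =
             emeasure (density lborel (\<lambda>x. ennreal (- H' x))) (box a b)"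
    and fin: "emeasure (density lborel (\<lambda>x. ennreal (H' x))) (box a b) \<noteq> \<infinity>" for a b
  proof -
    obtain r q where rq: "0 \<le> r" "0 \<le> q"
      "(\<integral>\<^sup>+x. ennreal (H' x * indicator (box a b) x) \<partial>lborel) = ennreal r"
      "(\<integral>\<^sup>+x. ennreal (- (H' x * indicator (box a b) x)) \<partial>lborel) = ennreal q"
      "(\<integral>x. H' x * indicator (box a b) x \<partial>lborel) = r - q"
      by (rule integrableE[OF intbox'])
    have "r = q" using rq box0' by simp
    have e1: "emeasure (density lborel (\<lambda>x. ennreal (H' x))) (box a b) = ennreal r"
      by (subst emeasure_density) (auto simp: rq(3)[symmetric] intro!: nn_integral_cong split: split_indicator)
    have e2: "emeasure (density lborel (\<lambda>x. ennreal (- H' x))) (box a b) = ennreal q"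
      by (subst emeasure_density) (auto simp: rq(4)[symmetric] intro!: nn_integral_cong split: split_indicator)
    show "emeasure (density lborel (\<lambda>x. ennreal (H' x))) (box a b) =
             emeasure (density lborel (\<lambda>x. ennreal (- H' x))) (box a b)" using e1 e2 \<open>r = q\<close> by simp
    show "emeasure (density lborel (\<lambda>x. ennreal (H' x))) (box a b) \<noteq> \<infinity>" using e1 by simp
  qed
  have deq: "density lborel (\<lambda>x. ennreal (H' x)) = density lborel (\<lambda>x. ennreal (- H' x))"
  proof (rule measure_eqI_generator_eq[where E="?E" and \<Omega>=UNIV and A="?A"])
    show "Int_stable ?E" by (auto simp: Int_stable_def box_Int_box)
    show "?E \<subseteq> Pow UNIV" by simp
    show "X \<in> ?E \<Longrightarrow> emeasure (density lborel (\<lambda>x. ennreal (H' x))) X =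
             emeasure (density lborel (\<lambda>x. ennreal (- H' x))) X" for X using emb by auto
    show "sets (density lborel (\<lambda>x. ennreal (H' x))) = sigma_sets UNIV ?E"
      by (simp add: borel_eq_box)
    show "sets (density lborel (\<lambda>x. ennreal (- H' x))) = sigma_sets UNIV ?E"
      by (simp add: borel_eq_box)
    show "range ?A \<subseteq> ?E" by auto
    show "(\<Union>i. ?A i) = UNIV" by (rule UN_box_eq_UNIV)
    show "emeasure (density lborel (\<lambda>x. ennreal (H' x))) (?A i) \<noteq> \<infinity>" for i by (rule fin)
  qed
  have "AE x in lborel. ennreal (H' x) = ennreal (- H' x)"
    by (rule sigma_finite_measure.density_unique[OF sigma_finite_lborel _ _ deq]) auto
  then have "AE x in lborel. H x = 0" using ae by eventually_elim (auto dest: ennreal_neg_eq)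
  then show ?thesis by (rule AE_completion)
qed

lemma comp_meas: "G \<in> borel_measurable (lebesgue :: R3 measure) \<Longrightarrow> (\<lambda>x. (G x :: R3) $ i) \<in> borel_measurable lebesgue"
  by (rule measurable_compose[OF _ borel_measurable_nth])

lemma comp_sq_le: "((x :: R3) $ i)\<^sup>2 \<le> (norm x)\<^sup>2"
proof -
  have "\<bar>x $ i\<bar> \<le> \<bar>norm x\<bar>" using component_le_norm_cart[of x i] by simp
  then show ?thesis using abs_le_square_iff[of "x $ i" "norm x"] by simp
qed

lemma L2v_comp:
  assumes "L2v G" shows "integrable lebesgue (\<lambda>x. (G x $ i)\<^sup>2)"
proof (rule Bochner_Integration.integrable_bound)
  show "integrable lebesgue (\<lambda>x. (norm (G x))\<^sup>2)" using assms by (simp add: L2v_def)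
  show "(\<lambda>x. (G x $ i)\<^sup>2) \<in> borel_measurable lebesgue"
    using assms comp_meas unfolding L2v_def by (intro borel_measurable_power) auto
  show "AE x in lebesgue. norm ((G x $ i)\<^sup>2) \<le> norm ((norm (G x))\<^sup>2)"
    by (intro AE_I2) (simp add: comp_sq_le)
qed

lemma weak_grad_unique:
  assumes g1: "is_weak_grad u G1" and g2: "is_weak_grad u G2"
  shows "AE x in lebesgue. G1 x = G2 x"
proof -
  have L1: "L2v G1" and L2: "L2v G2" using g1 g2 by (auto simp: is_weak_grad_def)
  have m1: "G1 \<in> borel_measurable lebesgue" and m2: "G2 \<in> borel_measurable lebesgue"
    using L1 L2 by (auto simp: L2v_def)
  have comp: "AE x in lebesgue. G1 x $ i - G2 x $ i = 0" for i
  proof (rule ae_zero_of_tests)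
    show mH: "(\<lambda>x. G1 x $ i - G2 x $ i) \<in> borel_measurable lebesgue"
      using comp_meas[OF m1] comp_meas[OF m2] by (rule borel_measurable_diff)
    show "integrable lebesgue (\<lambda>x. (G1 x $ i - G2 x $ i)\<^sup>2)"
    proof (rule Bochner_Integration.integrable_bound)
      show "integrable lebesgue (\<lambda>x. 2 * (G1 x $ i)\<^sup>2 + 2 * (G2 x $ i)\<^sup>2)"
        using L2v_comp[OF L1, of i] L2v_comp[OF L2, of i] by auto
      show "(\<lambda>x. (G1 x $ i - G2 x $ i)\<^sup>2) \<in> borel_measurable lebesgue"
        using mH by (rule borel_measurable_power)
      show "AE x in lebesgue. norm ((G1 x $ i - G2 x $ i)\<^sup>2) \<le> norm (2 * (G1 x $ i)\<^sup>2 + 2 * (G2 x $ i)\<^sup>2)"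
      proof (intro AE_I2)
        fix x
        have "(G1 x $ i - G2 x $ i)\<^sup>2 \<le> 2 * (G1 x $ i)\<^sup>2 + 2 * (G2 x $ i)\<^sup>2"
          using zero_le_power2[of "G1 x $ i + G2 x $ i"] by (simp add: power2_eq_square algebra_simps)
        then show "norm ((G1 x $ i - G2 x $ i)\<^sup>2) \<le> norm (2 * (G1 x $ i)\<^sup>2 + 2 * (G2 x $ i)\<^sup>2)"
          by simp
      qed
    qed
    show "(\<integral>x. (G1 x $ i - G2 x $ i) * \<psi> x \<partial>lebesgue) = 0" if t: "cc1 UNIV \<psi> g" for \<psi> g
    proof -
      obtain B where B: "\<And>x. \<bar>\<psi> x\<bar> \<le> B * indicator (closure {x. \<psi> x \<noteq> 0}) x"
        using cc1_test_bounded[OF t] by blast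
      have K: "compact (closure {x. \<psi> x \<noteq> 0})" using t by (simp add: cc1_def)
      have \<psi>m: "\<psi> \<in> borel_measurable lebesgue" using t by (intro cont_meas c1g_cont cc1_c1g)
      have i1: "integrable lebesgue (\<lambda>x. G1 x $ i * \<psi> x)"
        by (rule loc_integrable[OF comp_meas[OF m1] L2v_comp[OF L1] \<psi>m B K])
      have i2: "integrable lebesgue (\<lambda>x. G2 x $ i * \<psi> x)"
        by (rule loc_integrable[OF comp_meas[OF m2] L2v_comp[OF L2] \<psi>m B K])
      have e1: "(\<integral>x. u x * (g x $ i) \<partial>lebesgue) = - (\<integral>x. (G1 x $ i) * \<psi> x \<partial>lebesgue)"
        using g1 t by (auto simp: is_weak_grad_def)
      have e2: "(\<integral>x. u x * (g x $ i) \<partial>lebesgue) = - (\<integral>x. (G2 x $ i) * \<psi> x \<partial>lebesgue)"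
        using g2 t by (auto simp: is_weak_grad_def)
      have "(\<integral>x. (G1 x $ i - G2 x $ i) * \<psi> x \<partial>lebesgue) =
            (\<integral>x. G1 x $ i * \<psi> x - G2 x $ i * \<psi> x \<partial>lebesgue)"
        by (simp add: algebra_simps)
      also have "\<dots> = (\<integral>x. G1 x $ i * \<psi> x \<partial>lebesgue) - (\<integral>x. G2 x $ i * \<psi> x \<partial>lebesgue)"
        using i1 i2 by (rule Bochner_Integration.integral_diff)
      finally show ?thesis using e1 e2 by simp
    qed
  qed
  then have "AE x in lebesgue. \<forall>i\<in>UNIV. G1 x $ i - G2 x $ i = 0"
    by (intro AE_finite_allI) auto
  then show ?thesis by eventually_elim (simp add: vec_eq_iff)
qed

lemma h1norm2_cc1:
  assumes a: "cc1 U w gw"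
  shows "h1norm2 w = (\<integral>x. (norm (gw x))\<^sup>2 + (w x)\<^sup>2 \<partial>lebesgue)"
proof -
  have wg: "is_weak_grad w gw" using a by (rule weak_grad_cc1)
  then have ws: "is_weak_grad w (wgrad w)" unfolding wgrad_def by (rule someI[where P="is_weak_grad w"])
  have ae: "AE x in lebesgue. wgrad w x = gw x" by (rule weak_grad_unique[OF ws wg])
  have m1: "wgrad w \<in> borel_measurable lebesgue" using ws by (simp add: is_weak_grad_def L2v_def)
  have m2: "gw \<in> borel_measurable lebesgue" using wg by (simp add: is_weak_grad_def L2v_def)
  have m3: "w \<in> borel_measurable lebesgue" using a by (intro cont_meas c1g_cont cc1_c1g)
  show ?thesis unfolding h1norm2_def
    using m1 m2 m3 ae by (intro integral_cong_AE) auto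
qed

definition bump :: "R3 \<Rightarrow> real \<Rightarrow> R3 \<Rightarrow> real" where
  "bump c e x = hh (e\<^sup>2 + (-1) * ((x - c) \<bullet> (x - c)))"
definition bgr :: "R3 \<Rightarrow> real \<Rightarrow> R3 \<Rightarrow> R3" where
  "bgr c e x = hh' (e\<^sup>2 + (-1) * ((x - c) \<bullet> (x - c))) *\<^sub>R (0 + (-1) *\<^sub>R (2 *\<^sub>R (x - c)))"

lemma bump_c1g: "c1g (bump c e) (bgr c e)"
  unfolding bump_def[abs_def] bgr_def[abs_def]
  by (rule c1g_comp[OF hh_deriv' hh'_cont c1g_add[OF c1g_const c1g_scale[OF c1g_normsq]]])

lemma inner_self_dist: "(x - c) \<bullet> (x - c) = (dist x c)\<^sup>2"
  by (simp add: dist_norm power2_norm_eq_inner)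

lemma bump_zero: "x \<notin> ball c e \<Longrightarrow> e \<ge> 0 \<Longrightarrow> bump c e x = 0"
proof -
  assume "x \<notin> ball c e" "e \<ge> 0"
  then have "e\<^sup>2 \<le> (dist x c)\<^sup>2" by (simp add: dist_commute power_mono)
  then show ?thesis unfolding bump_def inner_self_dist by (intro hh_zero) simp
qed

lemma bgr_zero: "x \<notin> ball c e \<Longrightarrow> e \<ge> 0 \<Longrightarrow> bgr c e x = 0"
proof -
  assume "x \<notin> ball c e" "e \<ge> 0"
  then have "e\<^sup>2 \<le> (dist x c)\<^sup>2" by (simp add: dist_commute power_mono)
  then show ?thesis unfolding bgr_def inner_self_dist hh'_def by simp
qed

lemma bump_nonneg: "bump c e x \<ge> 0" by (simp add: bump_def hh_nonneg)

lemma bump_pos: "x \<in> ball c e \<Longrightarrow> bump c e x > 0"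
proof -
  assume "x \<in> ball c e"
  then have "dist x c < e" by (simp add: dist_commute)
  then have "(dist x c)\<^sup>2 < e\<^sup>2" by (simp add: power_strict_mono)
  then show ?thesis unfolding bump_def inner_self_dist by (intro hh_pos) simp
qed

lemma bump_le: "bump c e x \<le> e ^ 4"
proof -
  have "max 0 (e\<^sup>2 + - 1 * (dist x c)\<^sup>2) \<le> e\<^sup>2" by simp
  then have "(max 0 (e\<^sup>2 + - 1 * (dist x c)\<^sup>2))\<^sup>2 \<le> (e\<^sup>2)\<^sup>2" by (intro power_mono) auto
  then show ?thesis unfolding bump_def inner_self_dist hh_def by (simp add: power_mult[symmetric])
qed

lemma bump_ge: "x \<in> ball c (e/2) \<Longrightarrow> e \<ge> 0 \<Longrightarrow> bump c e x \<ge> (3 * e\<^sup>2 / 4)\<^sup>2"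
proof -
  assume "x \<in> ball c (e/2)" "e \<ge> 0"
  then have "dist x c < e/2" by (simp add: dist_commute)
  then have "(dist x c)\<^sup>2 \<le> (e/2)\<^sup>2" by (intro power_mono) auto
  then have "3 * e\<^sup>2 / 4 \<le> e\<^sup>2 + - 1 * (dist x c)\<^sup>2" by (simp add: power_divide)
  then have "3 * e\<^sup>2 / 4 \<le> max 0 (e\<^sup>2 + - 1 * (dist x c)\<^sup>2)" by linarith
  then have "(3 * e\<^sup>2 / 4)\<^sup>2 \<le> (max 0 (e\<^sup>2 + - 1 * (dist x c)\<^sup>2))\<^sup>2" by (intro power_mono) auto
  then show ?thesis unfolding bump_def inner_self_dist hh_def by simp
qed

lemma bump_transl: "bump c2 e x = bump c1 e (x + (c1 - c2))"
  by (simp add: bump_def algebra_simps)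

lemma bgr_transl: "bgr c2 e x = bgr c1 e (x + (c1 - c2))"
  by (simp add: bgr_def algebra_simps)

lemma bump_cc1: "e \<ge> 0 \<Longrightarrow> cball c e \<subseteq> U \<Longrightarrow> cc1 U (bump c e) (bgr c e)"
  by (rule cc1_intro[OF bump_c1g compact_cball]) (auto intro: bump_zero)

lemma bump_cont: "continuous_on UNIV (bump c e)"
  by (rule c1g_cont[OF bump_c1g])

lemma bgr_cont: "continuous_on UNIV (bgr c e)"
  using bump_c1g by (simp add: c1g_def)

lemma integ_bump:
  assumes c: "continuous_on UNIV h" and z: "\<And>x. bump c e x = 0 \<Longrightarrow> bgr c e x = 0 \<Longrightarrow> h x = 0"
    and e: "e \<ge> 0"
  shows "integrable lebesgue (h :: R3 \<Rightarrow> real)"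
  by (rule integ_cs[OF c compact_cball[of c e]]) (use z bump_zero bgr_zero e in auto)

lemma integral_ge_ball:
  fixes g :: "R3 \<Rightarrow> real"
  assumes gi: "integrable lebesgue g" and g0: "\<And>x. g x \<ge> 0" and gb: "\<And>x. x \<in> ball c r \<Longrightarrow> g x \<ge> b"
  shows "(\<integral>x. g x \<partial>lebesgue) \<ge> b * measure lborel (ball c r)"
proof -
  have bl: "ball c r \<in> sets lebesgue" by (intro borel_in_leb) auto
  have fin: "emeasure lebesgue (ball c r) < \<infinity>"
    using emeasure_lborel_ball_finite[of c r] by (simp add: emeasure_completion)
  have ii: "integrable lebesgue (indicator (ball c r) :: R3 \<Rightarrow> real)"
    by (rule integrable_real_indicator[OF bl fin])
  show ?thesis
  proof (cases "b \<ge> 0")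
    case True
    have "(\<integral>x. b * indicator (ball c r) x \<partial>lebesgue) \<le> (\<integral>x. g x \<partial>lebesgue)"
      using ii gi by (intro integral_mono) (auto simp: g0 gb True split: split_indicator)
    moreover have "(\<integral>x. b * indicator (ball c r) x \<partial>lebesgue) = b * measure lborel (ball c r)"
      using bl by simp
    ultimately show ?thesis by simp
  next
    case False
    then have "b * measure lborel (ball c r) \<le> 0" by (simp add: mult_nonpos_nonneg)
    also have "0 \<le> (\<integral>x. g x \<partial>lebesgue)" using g0 by simp
    finally show ?thesis .
  qed
qed

locale setting =
  fixes c1 c2 :: R3 and e :: real and \<Omega>1 \<Omega>2 :: "R3 set" and F :: "real \<Rightarrow> real"
  assumes e_pos: "e > 0" and sub1: "cball c1 e \<subseteq> \<Omega>1" and sub2: "cball c2 e \<subseteq> \<Omega>2"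
    and disj: "\<Omega>1 \<inter> \<Omega>2 = {}" and Fc: "continuous_on UNIV F" and F0: "F 0 = 0"
begin

definition uu :: "real \<Rightarrow> real \<Rightarrow> R3 \<Rightarrow> real" where
  "uu \<alpha> \<beta> = (\<lambda>x. \<alpha> * bump c1 e x + \<beta> * bump c2 e x)"
definition AA :: real where
  "AA = (\<integral>x. (norm (bgr c1 e x))\<^sup>2 + (bump c1 e x)\<^sup>2 \<partial>lebesgue)"
definition \<Phi> :: "real \<Rightarrow> real" where
  "\<Phi> r = (\<integral>x. F (r * bump c1 e x) \<partial>lebesgue)"

lemma e_nn: "e \<ge> 0" using e_pos by simp

lemma in1: "x \<in> ball c1 e \<Longrightarrow> x \<in> \<Omega>1" using sub1 by auto
lemma in2: "x \<in> ball c2 e \<Longrightarrow> x \<in> \<Omega>2" using sub2 by auto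
lemma out2: "x \<in> \<Omega>1 \<Longrightarrow> x \<notin> ball c2 e" using in2 disj by auto
lemma out1: "x \<in> \<Omega>2 \<Longrightarrow> x \<notin> ball c1 e" using in1 disj by auto

lemma sep: "(bump c1 e x = 0 \<and> bgr c1 e x = 0) \<or> (bump c2 e x = 0 \<and> bgr c2 e x = 0)"
proof (cases "x \<in> ball c1 e")
  case True
  then have "x \<notin> ball c2 e" by (intro out2 in1)
  then show ?thesis using bump_zero bgr_zero e_nn by auto
next
  case False
  then show ?thesis using bump_zero bgr_zero e_nn by auto
qed

lemma uu_cc1: "cc1 (\<Omega>1 \<union> \<Omega>2) (uu \<alpha> \<beta>) (\<lambda>x. \<alpha> *\<^sub>R bgr c1 e x + \<beta> *\<^sub>R bgr c2 e x)"
  unfolding uu_def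
proof (rule cc1_intro[where K="cball c1 e \<union> cball c2 e"])
  show "c1g (\<lambda>x. \<alpha> * bump c1 e x + \<beta> * bump c2 e x) (\<lambda>x. \<alpha> *\<^sub>R bgr c1 e x + \<beta> *\<^sub>R bgr c2 e x)"
    by (intro c1g_add c1g_scale bump_c1g)
  show "compact (cball c1 e \<union> cball c2 e)" by auto
  show "cball c1 e \<union> cball c2 e \<subseteq> \<Omega>1 \<union> \<Omega>2" using sub1 sub2 by auto
  show "\<alpha> * bump c1 e x + \<beta> * bump c2 e x = 0" if "x \<notin> cball c1 e \<union> cball c2 e" for x
    using that bump_zero[of x c1 e] bump_zero[of x c2 e] e_nn by auto
qed

lemma uu_cc1_UNIV: "cc1 UNIV (uu \<alpha> \<beta>) (\<lambda>x. \<alpha> *\<^sub>R bgr c1 e x + \<beta> *\<^sub>R bgr c2 e x)"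
  using uu_cc1[of \<alpha> \<beta>] by (auto simp: cc1_def)

lemma AA_transl: "(\<integral>x. (norm (bgr c2 e x))\<^sup>2 + (bump c2 e x)\<^sup>2 \<partial>lebesgue) = AA"
proof -
  let ?k = "\<lambda>y. (norm (bgr c1 e y))\<^sup>2 + (bump c1 e y)\<^sup>2"
  have "?k \<in> borel_measurable borel"
    by (intro borel_measurable_continuous_onI continuous_intros bgr_cont bump_cont)
  then have "(\<integral>x. ?k (x + (c1 - c2)) \<partial>lebesgue) = (\<integral>x. ?k x \<partial>lebesgue)" by (rule integral_transl)
  then show ?thesis unfolding AA_def by (simp add: bump_transl[of c2 e _ c1] bgr_transl[of c2 e _ c1])
qed

lemma int_k1: "integrable lebesgue (\<lambda>x. (norm (bgr c1 e x))\<^sup>2 + (bump c1 e x)\<^sup>2)"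
  by (rule integ_bump[OF _ _ e_nn]) (auto intro!: continuous_intros bgr_cont bump_cont)

lemma int_k2: "integrable lebesgue (\<lambda>x. (norm (bgr c2 e x))\<^sup>2 + (bump c2 e x)\<^sup>2)"
  by (rule integ_bump[OF _ _ e_nn]) (auto intro!: continuous_intros bgr_cont bump_cont)

lemma h1norm2_uu: "h1norm2 (uu \<alpha> \<beta>) = (\<alpha>\<^sup>2 + \<beta>\<^sup>2) * AA"
proof -
  have "h1norm2 (uu \<alpha> \<beta>) = (\<integral>x. (norm (\<alpha> *\<^sub>R bgr c1 e x + \<beta> *\<^sub>R bgr c2 e x))\<^sup>2 + (uu \<alpha> \<beta> x)\<^sup>2 \<partial>lebesgue)"
    by (rule h1norm2_cc1[OF uu_cc1])
  also have "\<dots> = (\<integral>x. \<alpha>\<^sup>2 * ((norm (bgr c1 e x))\<^sup>2 + (bump c1 e x)\<^sup>2) +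
                      \<beta>\<^sup>2 * ((norm (bgr c2 e x))\<^sup>2 + (bump c2 e x)\<^sup>2) \<partial>lebesgue)"
  proof (rule Bochner_Integration.integral_cong[OF refl])
    fix x
    show "(norm (\<alpha> *\<^sub>R bgr c1 e x + \<beta> *\<^sub>R bgr c2 e x))\<^sup>2 + (uu \<alpha> \<beta> x)\<^sup>2 =
          \<alpha>\<^sup>2 * ((norm (bgr c1 e x))\<^sup>2 + (bump c1 e x)\<^sup>2) + \<beta>\<^sup>2 * ((norm (bgr c2 e x))\<^sup>2 + (bump c2 e x)\<^sup>2)"
      using sep[of x] by (auto simp: uu_def power_mult_distrib algebra_simps)
  qed
  also have "\<dots> = \<alpha>\<^sup>2 * AA + \<beta>\<^sup>2 * AA"
  proof -
    have "(\<integral>x. \<alpha>\<^sup>2 * ((norm (bgr c1 e x))\<^sup>2 + (bump c1 e x)\<^sup>2) +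
                      \<beta>\<^sup>2 * ((norm (bgr c2 e x))\<^sup>2 + (bump c2 e x)\<^sup>2) \<partial>lebesgue) =
          (\<integral>x. \<alpha>\<^sup>2 * ((norm (bgr c1 e x))\<^sup>2 + (bump c1 e x)\<^sup>2) \<partial>lebesgue) +
          (\<integral>x. \<beta>\<^sup>2 * ((norm (bgr c2 e x))\<^sup>2 + (bump c2 e x)\<^sup>2) \<partial>lebesgue)"
      using int_k1 int_k2 by (intro Bochner_Integration.integral_add integrable_mult_right)
    also have "\<dots> = \<alpha>\<^sup>2 * AA + \<beta>\<^sup>2 * (\<integral>x. (norm (bgr c2 e x))\<^sup>2 + (bump c2 e x)\<^sup>2 \<partial>lebesgue)"
      unfolding AA_def by (simp only: integral_mult_right_zero)
    finally show ?thesis by (simp only: AA_transl)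
  qed
  finally show ?thesis by (simp add: algebra_simps)
qed

lemma intF_bump: "integrable lebesgue (\<lambda>x. F (r * bump c e x))"
proof (rule integ_bump[where c=c, OF _ _ e_nn])
  show "continuous_on UNIV (\<lambda>x. F (r * bump c e x))"
    by (rule continuous_on_compose2[OF Fc]) (auto intro!: continuous_intros bump_cont)
qed (simp add: F0)

lemma Phi_transl: "(\<integral>x. F (r * bump c2 e x) \<partial>lebesgue) = \<Phi> r"
proof -
  have "(\<lambda>x. F (r * bump c1 e x)) \<in> borel_measurable borel"
    by (intro borel_measurable_continuous_onI continuous_on_compose2[OF Fc])
       (auto intro!: continuous_intros bump_cont)
  then have "(\<integral>x. F (r * bump c1 e (x + (c1 - c2))) \<partial>lebesgue) = \<Phi> r"
    unfolding \<Phi>_def by (rule integral_transl)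
  then show ?thesis by (simp add: bump_transl[of c2 e _ c1])
qed

lemma intF_uu: "(\<integral>x. F (uu \<alpha> \<beta> x) \<partial>lebesgue) = \<Phi> \<alpha> + \<Phi> \<beta>"
proof -
  have "(\<integral>x. F (uu \<alpha> \<beta> x) \<partial>lebesgue) = (\<integral>x. F (\<alpha> * bump c1 e x) + F (\<beta> * bump c2 e x) \<partial>lebesgue)"
  proof (rule Bochner_Integration.integral_cong[OF refl])
    fix x show "F (uu \<alpha> \<beta> x) = F (\<alpha> * bump c1 e x) + F (\<beta> * bump c2 e x)"
      using sep[of x] by (auto simp: uu_def F0)
  qed
  also have "\<dots> = \<Phi> \<alpha> + \<Phi> \<beta>"
    using intF_bump[of \<alpha> c1] intF_bump[of \<beta> c2] by (simp add: Phi_transl \<Phi>_def)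
  finally show ?thesis .
qed

lemma Jfun_uu: "Jfun Mhat F (uu \<alpha> \<beta>) = Mhat ((\<alpha>\<^sup>2 + \<beta>\<^sup>2) * AA) / 2 - (\<Phi> \<alpha> + \<Phi> \<beta>)"
  by (simp add: Jfun_def h1norm2_uu intF_uu)

lemma restr1: "restr \<Omega>1 (uu \<alpha> \<beta>) = uu \<alpha> 0"
proof
  fix x show "restr \<Omega>1 (uu \<alpha> \<beta>) x = uu \<alpha> 0 x"
  proof (cases "x \<in> \<Omega>1")
    case True
    then have "x \<notin> ball c2 e" by (rule out2)
    then show ?thesis using True bump_zero[of x c2 e] e_nn by (simp add: restr_def uu_def)
  next
    case False
    then have "x \<notin> ball c1 e" using in1 by blast
    then show ?thesis using False bump_zero[of x c1 e] e_nn by (simp add: restr_def uu_def)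
  qed
qed

lemma restr2: "restr \<Omega>2 (uu \<alpha> \<beta>) = uu 0 \<beta>"
proof
  fix x show "restr \<Omega>2 (uu \<alpha> \<beta>) x = uu 0 \<beta> x"
  proof (cases "x \<in> \<Omega>2")
    case True
    then have "x \<notin> ball c1 e" by (rule out1)
    then show ?thesis using True bump_zero[of x c1 e] e_nn by (simp add: restr_def uu_def)
  next
    case False
    then have "x \<notin> ball c2 e" using in2 by blast
    then show ?thesis using False bump_zero[of x c2 e] e_nn by (simp add: restr_def uu_def)
  qed
qed

lemma uu_lin: "(\<lambda>x. uu \<alpha> \<beta> x + t * uu \<gamma> \<delta> x) = uu (\<alpha> + t * \<gamma>) (\<beta> + t * \<delta>)"
  by (auto simp: uu_def algebra_simps)

lemma ball_pos: "measure lborel (ball c r) > 0" if "r > 0" for c :: R3 and r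
  using that by (simp add: content_ball_gt_0_iff)

lemma nonzero_ball:
  assumes "\<And>x. x \<in> ball c e \<Longrightarrow> w x \<noteq> 0"
  shows "nonzero w"
  unfolding nonzero_def
proof
  assume "AE x in lebesgue. w x = 0"
  then have "AE x in lebesgue. x \<notin> ball c e" by eventually_elim (use assms in auto)
  moreover have bl: "ball c e \<in> sets lebesgue" by (intro borel_in_leb) auto
  ultimately have "ball c e \<in> null_sets lebesgue" by (simp add: AE_iff_null_sets)
  then have "emeasure lebesgue (ball c e) = 0" by auto
  then have "emeasure lborel (ball c e) = 0" by (simp add: emeasure_completion)
  then have "measure lborel (ball c e) = 0" by (simp add: measure_def)
  then show False using ball_pos[OF e_pos, of c] by simp
qed

lemma nonzero_uu1: "\<alpha> \<noteq> 0 \<Longrightarrow> nonzero (uu \<alpha> \<beta>)"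
proof (rule nonzero_ball[where c=c1])
  fix x assume a: "\<alpha> \<noteq> 0" and x: "x \<in> ball c1 e"
  then have "x \<notin> ball c2 e" by (intro out2 in1)
  then show "uu \<alpha> \<beta> x \<noteq> 0" using bump_zero[of x c2 e] e_nn bump_pos[OF x] a by (simp add: uu_def)
qed

lemma nonzero_uu2: "\<beta> \<noteq> 0 \<Longrightarrow> nonzero (uu \<alpha> \<beta>)"
proof (rule nonzero_ball[where c=c2])
  fix x assume a: "\<beta> \<noteq> 0" and x: "x \<in> ball c2 e"
  then have "x \<notin> ball c1 e" by (intro out1 in2)
  then show "uu \<alpha> \<beta> x \<noteq> 0" using bump_zero[of x c1 e] e_nn bump_pos[OF x] a by (simp add: uu_def)
qed

lemma H10_uu: "uu \<alpha> \<beta> \<in> H10 (\<Omega>1 \<union> \<Omega>2)"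
proof -
  let ?g = "\<lambda>x. \<alpha> *\<^sub>R bgr c1 e x + \<beta> *\<^sub>R bgr c2 e x"
  have c: "cc1 (\<Omega>1 \<union> \<Omega>2) (uu \<alpha> \<beta>) ?g" by (rule uu_cc1)
  have uc: "continuous_on UNIV (uu \<alpha> \<beta>)" using c by (intro c1g_cont cc1_c1g)
  have "L2 (uu \<alpha> \<beta>)" unfolding L2_def
  proof
    show "uu \<alpha> \<beta> \<in> borel_measurable lebesgue" using uc by (rule cont_meas)
    show "integrable lebesgue (\<lambda>x. (uu \<alpha> \<beta> x)\<^sup>2)"
      by (rule cc1_integrable[OF c]) (use uc in \<open>auto intro!: continuous_intros\<close>)
  qed
  moreover have "is_weak_grad (uu \<alpha> \<beta>) ?g" using c by (rule weak_grad_cc1)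
  ultimately show ?thesis unfolding H10_def
    using c by (auto intro!: exI[where x="?g"] exI[where x="\<lambda>n. uu \<alpha> \<beta>"] exI[where x="\<lambda>n. ?g"])
qed

lemma AA_ge: "AA \<ge> (3 * e\<^sup>2 / 4)\<^sup>2 ^ 2 * measure lborel (ball c1 (e/2))"
  unfolding AA_def
proof (rule integral_ge_ball[OF int_k1])
  show "0 \<le> (norm (bgr c1 e x))\<^sup>2 + (bump c1 e x)\<^sup>2" for x by simp
  show "((3 * e\<^sup>2 / 4)\<^sup>2)\<^sup>2 \<le> (norm (bgr c1 e x))\<^sup>2 + (bump c1 e x)\<^sup>2" if "x \<in> ball c1 (e/2)" for x
  proof -
    have "(3 * e\<^sup>2 / 4)\<^sup>2 \<le> bump c1 e x" using bump_ge[OF that e_nn] .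
    then have "((3 * e\<^sup>2 / 4)\<^sup>2)\<^sup>2 \<le> (bump c1 e x)\<^sup>2" by (intro power_mono) auto
    then show ?thesis by (simp add: add_increasing)
  qed
qed

lemma AA_pos: "AA > 0"
proof -
  have "0 < (3 * e\<^sup>2 / 4)\<^sup>2 ^ 2 * measure lborel (ball c1 (e/2))"
    using e_pos ball_pos[of "e/2" c1] by simp
  then show ?thesis using AA_ge by linarith
qed

end

locale setting2 = setting +
  fixes f M Mhat :: "real \<Rightarrow> real" and m0 \<theta> :: real
  assumes Mhat_0: "Mhat 0 = 0"
    and Mhat_deriv: "\<forall>t\<ge>0. (Mhat has_real_derivative M t) (at t within {0..})"
    and M_nonneg: "\<forall>t\<ge>0. M t \<ge> 0"
    and M_mono: "mono_on {0..} M"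
    and M_0: "M 0 = m0" and m0_pos: "m0 > 0"
    and M2: "\<forall>s t. 0 < s \<and> s < t \<longrightarrow> M t / t < M s / s"
    and F_deriv: "\<forall>s. (F has_real_derivative f s) (at s)"
    and f_cont: "continuous_on UNIV f"
    and f1: "((\<lambda>s. f s / s) \<longlongrightarrow> 0) (at 0)"
    and th4: "\<theta> > 4"
    and f3: "\<forall>s. s \<noteq> 0 \<longrightarrow> 0 < \<theta> * F s \<and> \<theta> * F s \<le> s * f s"
begin

definition \<Phi>' :: "real \<Rightarrow> real" where
  "\<Phi>' r = (\<integral>x. f (r * bump c1 e x) * bump c1 e x \<partial>lebesgue)"

lemma Phi_deriv: "(\<Phi> has_real_derivative \<Phi>' r0) (at r0)"
proof -
  define L where "L = (\<bar>r0\<bar> + 1) * e ^ 4"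
  have "compact (f ` {-L..L})"
    by (intro compact_continuous_image continuous_on_subset[OF f_cont]) auto
  then obtain Bf where Bf: "\<And>y. y \<in> f ` {-L..L} \<Longrightarrow> norm y \<le> Bf"
    by (meson bounded_iff compact_imp_bounded)
  have "((\<lambda>r. \<integral>x. F (r * bump c1 e x) \<partial>lebesgue) has_real_derivative
         (\<integral>x. f (r0 * bump c1 e x) * bump c1 e x \<partial>lebesgue)) (at r0)"
  proof (rule deriv_under_integral[where K="cball c1 e" and B="Bf * e^4"])
    show "compact (cball c1 e)" by simp
    show "((\<lambda>r. F (r * bump c1 e x)) has_real_derivative f (r * bump c1 e x) * bump c1 e x) (at r)" for r x
      using F_deriv by (auto intro!: derivative_eq_intros DERIV_chain2[where f=F])
    show "\<bar>f (r * bump c1 e x) * bump c1 e x\<bar> \<le> Bf * e ^ 4" if r: "r \<in> {r0-1..r0+1}" for r x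
    proof -
      have b0: "0 \<le> bump c1 e x" and b1: "bump c1 e x \<le> e^4" by (rule bump_nonneg, rule bump_le)
      have ra: "\<bar>r\<bar> \<le> \<bar>r0\<bar> + 1" using r by auto
      have "\<bar>r * bump c1 e x\<bar> \<le> (\<bar>r0\<bar> + 1) * e^4"
        using b0 b1 ra by (simp add: abs_mult mult_mono)
      then have "r * bump c1 e x \<in> {-L..L}" unfolding L_def by (simp add: abs_le_iff)
      then have "f (r * bump c1 e x) \<in> f ` {-L..L}" by (rule imageI)
      then have fb: "\<bar>f (r * bump c1 e x)\<bar> \<le> Bf" using Bf by auto
      have "\<bar>f (r * bump c1 e x) * bump c1 e x\<bar> = \<bar>f (r * bump c1 e x)\<bar> * bump c1 e x"
        using b0 by (simp add: abs_mult)
      also have "\<dots> \<le> Bf * e^4" using fb b0 b1 by (meson abs_ge_zero mult_mono order_trans)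
      finally show ?thesis .
    qed
    show "F (r * bump c1 e x) = 0" if "x \<notin> cball c1 e" for r x
      using that bump_zero[of x c1 e] e_nn F0 by auto
    show "integrable lebesgue (\<lambda>x. F (r * bump c1 e x))" for r by (rule intF_bump)
    show "(\<lambda>x. f (r0 * bump c1 e x) * bump c1 e x) \<in> borel_measurable lebesgue"
      by (intro cont_meas continuous_intros continuous_on_compose2[OF f_cont] bump_cont) auto
  qed
  then show ?thesis unfolding \<Phi>_def[abs_def] \<Phi>'_def .
qed

lemma Phi_cont: "continuous_on UNIV \<Phi>"
  using Phi_deriv by (intro continuous_at_imp_continuous_on ballI DERIV_isCont) auto

lemma Phi_0: "\<Phi> 0 = 0" by (simp add: \<Phi>_def F0)

lemma f0: "f 0 = 0"
proof -
  have "(f \<longlongrightarrow> f 0) (at 0)" using f_cont by (simp add: continuous_on_def isCont_def continuous_on_eq_continuous_at)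
  moreover have "((\<lambda>s. f s / s * s) \<longlongrightarrow> 0 * 0) (at 0)" by (intro tendsto_mult f1 tendsto_ident_at)
  moreover have "\<forall>\<^sub>F s in at 0. f s / s * s = f s" by (auto simp: eventually_at_filter)
  ultimately have "(f \<longlongrightarrow> 0) (at (0::real))" by (simp add: tendsto_cong)
  with \<open>(f \<longlongrightarrow> f 0) (at 0)\<close> show ?thesis by (rule tendsto_unique[rotated, OF _ _ trivial_limit_at]) 
qed

lemma F_small:
  assumes "\<epsilon> > 0"
  shows "\<exists>\<delta>>0. \<forall>\<sigma>. \<bar>\<sigma>\<bar> \<le> \<delta> \<longrightarrow> \<bar>F \<sigma>\<bar> \<le> \<epsilon> * \<sigma>\<^sup>2"
proof -
  obtain \<delta> where d: "\<delta> > 0" and dd: "\<And>y. y \<noteq> 0 \<Longrightarrow> dist y 0 < \<delta> \<Longrightarrow> dist (f y / y) 0 < \<epsilon>"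
    using f1 assms unfolding tendsto_iff eventually_at by blast
  have fy: "\<bar>f y\<bar> \<le> \<epsilon> * \<bar>y\<bar>" if "\<bar>y\<bar> < \<delta>" for y
  proof (cases "y = 0")
    case True then show ?thesis by (simp add: f0)
  next
    case False
    then have "\<bar>f y / y\<bar> < \<epsilon>" using dd[of y] that by simp
    then show ?thesis using False by (simp add: abs_divide divide_less_eq less_imp_le)
  qed
  have "\<bar>F \<sigma>\<bar> \<le> \<epsilon> * \<sigma>\<^sup>2" if s: "\<bar>\<sigma>\<bar> \<le> \<delta>/2" for \<sigma>
  proof -
    have "\<bar>F \<sigma> - F 0\<bar> \<le> (\<epsilon> * \<bar>\<sigma>\<bar>) * \<bar>\<sigma> - 0\<bar>"
    proof (rule mvt_abs[where f'=f])
      show "(F has_real_derivative f t) (at t)" for t using F_deriv by simp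
      show "\<bar>f t\<bar> \<le> \<epsilon> * \<bar>\<sigma>\<bar>" if "min 0 \<sigma> \<le> t" "t \<le> max 0 \<sigma>" for t
      proof -
        have "\<bar>t\<bar> \<le> \<bar>\<sigma>\<bar>" using that by auto
        then have "\<bar>t\<bar> < \<delta>" using s d by linarith
        then have "\<bar>f t\<bar> \<le> \<epsilon> * \<bar>t\<bar>" by (rule fy)
        also have "\<dots> \<le> \<epsilon> * \<bar>\<sigma>\<bar>" using \<open>\<bar>t\<bar> \<le> \<bar>\<sigma>\<bar>\<close> assms by (simp add: mult_left_mono)
        finally show ?thesis .
      qed
    qed
    then show ?thesis by (simp add: F0 power2_eq_square abs_mult_self_eq mult.assoc)
  qed
  then show ?thesis using d by (intro exI[of _ "\<delta>/2"]) auto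
qed

lemma th_pos: "\<theta> > 0" using th4 by simp

lemma F_pos: "\<sigma> \<noteq> 0 \<Longrightarrow> F \<sigma> > 0"
  using f3 th_pos by (meson zero_less_mult_pos)

lemma F_nonneg: "F \<sigma> \<ge> 0"
  using F_pos[of \<sigma>] F0 by (cases "\<sigma> = 0") auto

lemma F_growth:
  assumes s: "\<sigma> \<ge> 1"
  shows "F \<sigma> \<ge> F 1 * \<sigma> powr \<theta>"
proof -
  define q where "q t = ln (F t) - \<theta> * ln t" for t
  have Fp: "F t > 0" if "t \<ge> 1" for t using F_pos that by auto
  have "q 1 \<le> q \<sigma>"
  proof (rule DERIV_nonneg_imp_increasing_open[OF s])
    fix t assume t: "1 < t" "t < \<sigma>"
    have "DERIV q t :> f t / F t - \<theta> * (1 / t)"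
      unfolding q_def[abs_def] using Fp[of t] t F_deriv
      by (auto intro!: derivative_eq_intros)
    moreover have "f t / F t - \<theta> * (1 / t) \<ge> 0"
    proof -
      have "\<theta> * F t \<le> t * f t" using f3 t by auto
      then have "\<theta> / t \<le> f t / F t" using Fp[of t] t by (simp add: field_simps)
      then show ?thesis by simp
    qed
    ultimately show "\<exists>y. DERIV q t :> y \<and> y \<ge> 0" by blast
  next
    have cF: "continuous_on {1..\<sigma>} F" by (rule continuous_on_subset[OF Fc]) auto
    have c1: "continuous_on {1..\<sigma>} (\<lambda>t. ln (F t))"
      by (rule continuous_on_ln[OF cF]) (use Fp in \<open>auto simp: less_le\<close>)
    have c2: "continuous_on {1..\<sigma>} (\<lambda>t. ln t)"
      by (rule continuous_on_ln[OF continuous_on_id]) auto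
    show "continuous_on {1..\<sigma>} q" unfolding q_def
      by (intro continuous_intros c1 c2)
  qed
  then have "ln (F 1) + \<theta> * ln \<sigma> \<le> ln (F \<sigma>)" unfolding q_def by simp
  then have "exp (ln (F 1) + \<theta> * ln \<sigma>) \<le> F \<sigma>" using Fp[OF s] by (simp add: ln_ge_iff)
  then show ?thesis using Fp[of 1] s by (simp add: exp_add powr_def mult.commute)
qed

lemma Mhat_cont: "continuous_on {0..} Mhat"
  unfolding continuous_on_eq_continuous_within using Mhat_deriv
  by (auto intro: DERIV_continuous)

lemma Mhat_deriv_at: "N > 0 \<Longrightarrow> (Mhat has_real_derivative M N) (at N)"
proof -
  assume N: "N > 0"
  have "N \<in> interior {0..}" using N by auto
  then have "at N within {0..} = at N" by (rule at_within_interior)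
  then show ?thesis using Mhat_deriv N by (metis less_imp_le)
qed

lemma Mhat_mvt:
  assumes N: "N > 0"
  obtains z where "0 < z" "z < N" "Mhat N = N * M z"
proof -
  have "continuous_on {0..N} Mhat" by (rule continuous_on_subset[OF Mhat_cont]) auto
  moreover have "Mhat differentiable (at x)" if "0 < x" "x < N" for x
    using Mhat_deriv_at[of x] that by (auto simp: real_differentiable_def)
  ultimately obtain l z where z: "0 < z" "z < N" "DERIV Mhat z :> l" "Mhat N - Mhat 0 = (N - 0) * l"
    using MVT[OF N] by blast
  have "l = M z" using z(3) Mhat_deriv_at[OF z(1)] by (rule DERIV_unique)
  then show ?thesis using z Mhat_0 that by auto
qed

lemma Mhat_lower: "N \<ge> 0 \<Longrightarrow> Mhat N \<ge> m0 * N"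
proof (cases "N = 0")
  case True then show ?thesis by (simp add: Mhat_0)
next
  case False
  assume "N \<ge> 0"
  then have N: "N > 0" using False by simp
  obtain z where z: "0 < z" "z < N" "Mhat N = N * M z" by (rule Mhat_mvt[OF N])
  have "M 0 \<le> M z" using M_mono z by (auto simp: mono_on_def)
  then show ?thesis using z N M_0 by (simp add: mult.commute mult_left_mono)
qed

lemma M_upper: "z \<ge> 0 \<Longrightarrow> M z \<le> M 1 * (1 + z)"
proof -
  assume z: "z \<ge> 0"
  have M1: "M 1 \<ge> 0" using M_nonneg by simp
  show ?thesis
  proof (cases "z \<le> 1")
    case True
    then have "M z \<le> M 1" using M_mono z by (auto simp: mono_on_def)
    also have "\<dots> \<le> M 1 * (1 + z)" using M1 z mult_left_mono[of 1 "1 + z" "M 1"] by simp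
    finally show ?thesis .
  next
    case False
    then have "M z / z < M 1 / 1" using M2[rule_format, of 1 z] by simp
    then have "M z < M 1 * z" using False by (simp add: divide_less_eq)
    then show ?thesis using M1 by (simp add: algebra_simps)
  qed
qed

lemma Mhat_upper: "N \<ge> 0 \<Longrightarrow> Mhat N \<le> M 1 * (1 + N) * N"
proof (cases "N = 0")
  case True then show ?thesis by (simp add: Mhat_0)
next
  case False
  assume "N \<ge> 0"
  then have N: "N > 0" using False by simp
  obtain z where z: "0 < z" "z < N" "Mhat N = N * M z" by (rule Mhat_mvt[OF N])
  have "M z \<le> M 1 * (1 + z)" using z by (intro M_upper) auto
  also have "\<dots> \<le> M 1 * (1 + N)" using z M_nonneg by (intro mult_left_mono) auto
  finally show ?thesis using z N by (simp add: mult.commute mult_left_mono)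
qed

end

context setting2
begin

definition \<psi> :: "real \<Rightarrow> real" where
  "\<psi> s = Mhat (2 * AA * s\<^sup>2) / 4 - \<Phi> s"

lemma int_bsq: "integrable lebesgue (\<lambda>x. (bump c1 e x)\<^sup>2)"
  by (rule integ_bump[where c=c1, OF _ _ e_nn]) (auto intro!: continuous_intros bump_cont)

lemma bsq_le_AA: "(\<integral>x. (bump c1 e x)\<^sup>2 \<partial>lebesgue) \<le> AA"
  unfolding AA_def by (rule integral_mono[OF int_bsq int_k1]) simp

lemma psi_small: "\<exists>s0>0. \<psi> s0 > 0"
proof -
  define \<epsilon> where "\<epsilon> = m0 / 4"
  have ep: "\<epsilon> > 0" using m0_pos by (simp add: \<epsilon>_def)
  obtain \<delta> where d: "\<delta> > 0" and dF: "\<And>\<sigma>. \<bar>\<sigma>\<bar> \<le> \<delta> \<Longrightarrow> \<bar>F \<sigma>\<bar> \<le> \<epsilon> * \<sigma>\<^sup>2"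
    using F_small[OF ep] by blast
  define s0 where "s0 = \<delta> / e ^ 4"
  have e4: "e ^ 4 > 0" using e_pos by simp
  have s0p: "s0 > 0" using d e4 by (simp add: s0_def)
  have "\<Phi> s0 \<le> (\<integral>x. \<epsilon> * s0\<^sup>2 * (bump c1 e x)\<^sup>2 \<partial>lebesgue)"
    unfolding \<Phi>_def
  proof (rule integral_mono[OF intF_bump])
    show "integrable lebesgue (\<lambda>x. \<epsilon> * s0\<^sup>2 * (bump c1 e x)\<^sup>2)" using int_bsq by simp
    fix x
    have "\<bar>s0 * bump c1 e x\<bar> \<le> s0 * e ^ 4"
      using s0p bump_nonneg[of c1 e x] bump_le[of c1 e x] by (simp add: abs_mult mult_left_mono)
    also have "\<dots> = \<delta>" using e4 by (simp add: s0_def)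
    finally have "\<bar>F (s0 * bump c1 e x)\<bar> \<le> \<epsilon> * (s0 * bump c1 e x)\<^sup>2" by (rule dF)
    then show "F (s0 * bump c1 e x) \<le> \<epsilon> * s0\<^sup>2 * (bump c1 e x)\<^sup>2"
      by (simp add: power_mult_distrib mult.assoc)
  qed
  also have "\<dots> = \<epsilon> * s0\<^sup>2 * (\<integral>x. (bump c1 e x)\<^sup>2 \<partial>lebesgue)" by simp
  also have "\<dots> \<le> \<epsilon> * s0\<^sup>2 * AA" using bsq_le_AA ep by (simp add: mult_left_mono)
  finally have P: "\<Phi> s0 \<le> \<epsilon> * s0\<^sup>2 * AA" .
  have "Mhat (2 * AA * s0\<^sup>2) \<ge> m0 * (2 * AA * s0\<^sup>2)" using AA_pos by (intro Mhat_lower) simp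
  then have "\<psi> s0 \<ge> m0 * (2 * AA * s0\<^sup>2) / 4 - \<epsilon> * s0\<^sup>2 * AA" using P by (simp add: \<psi>_def)
  moreover have "m0 * (2 * AA * s0\<^sup>2) / 4 - \<epsilon> * s0\<^sup>2 * AA = m0 * AA * s0\<^sup>2 / 4"
    by (simp add: \<epsilon>_def field_simps)
  moreover have "m0 * AA * s0\<^sup>2 / 4 > 0" using m0_pos AA_pos s0p by simp
  ultimately show ?thesis using s0p by (intro exI[of _ s0]) auto
qed

lemma psi_large: "\<exists>R>s0. \<psi> R < 0"
proof -
  define \<beta> where "\<beta> = (3 * e\<^sup>2 / 4)\<^sup>2"
  define \<mu> where "\<mu> = measure lborel (ball c1 (e/2))"
  define c where "c = F 1 * \<beta> powr \<theta> * \<mu>"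
  define C where "C = M 1 * (1 + 2 * AA) * (2 * AA) / 4"
  have bp: "\<beta> > 0" using e_pos by (simp add: \<beta>_def)
  have mp: "\<mu> > 0" unfolding \<mu>_def using e_pos by (intro ball_pos) simp
  have F1: "F 1 > 0" by (rule F_pos) simp
  have cp: "c > 0" using bp mp F1 by (simp add: c_def)
  have M1: "M 1 \<ge> 0" using M_nonneg by simp
  have Cn: "C \<ge> 0" using M1 AA_pos by (simp add: C_def)
  define R where "R = 1 + max (max s0 1) (max (1/\<beta>) ((C/c + 1) powr (1/(\<theta>-4))))"
  have R1: "R \<ge> 1" "R > s0" unfolding R_def by auto
  have Rb: "R * \<beta> \<ge> 1"
  proof -
    have "R \<ge> 1/\<beta>" unfolding R_def by auto
    then show ?thesis using bp by (simp add: divide_le_eq mult.commute)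
  qed
  have Rp: "R powr (\<theta> - 4) \<ge> C/c + 1"
  proof -
    have base: "(C/c + 1) powr (1/(\<theta>-4)) \<le> R" unfolding R_def by auto
    have "((C/c + 1) powr (1/(\<theta>-4))) powr (\<theta> - 4) \<le> R powr (\<theta> - 4)"
      using base th4 by (intro powr_mono2) auto
    moreover have "((C/c + 1) powr (1/(\<theta>-4))) powr (\<theta> - 4) = C/c + 1"
      using th4 Cn cp by (simp add: powr_powr)
    ultimately show ?thesis by simp
  qed
  have PhiR: "\<Phi> R \<ge> F 1 * (R * \<beta>) powr \<theta> * \<mu>"
    unfolding \<Phi>_def \<mu>_def
  proof (rule integral_ge_ball[OF intF_bump])
    show "0 \<le> F (R * bump c1 e x)" for x by (rule F_nonneg)
    show "F 1 * (R * \<beta>) powr \<theta> \<le> F (R * bump c1 e x)" if x: "x \<in> ball c1 (e/2)" for x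
    proof -
      have b: "\<beta> \<le> bump c1 e x" unfolding \<beta>_def using bump_ge[OF x e_nn] .
      then have Rbx: "R * \<beta> \<le> R * bump c1 e x" using R1 by (simp add: mult_left_mono)
      then have ge1: "R * bump c1 e x \<ge> 1" using Rb by simp
      have "F 1 * (R * \<beta>) powr \<theta> \<le> F 1 * (R * bump c1 e x) powr \<theta>"
        using Rbx bp R1 th_pos F1 by (intro mult_left_mono powr_mono2) auto
      also have "\<dots> \<le> F (R * bump c1 e x)" by (rule F_growth[OF ge1])
      finally show ?thesis .
    qed
  qed
  have "R powr \<theta> = R ^ 4 * R powr (\<theta> - 4)"
  proof -
    have "R powr \<theta> = R powr (4 + (\<theta> - 4))" by simp
    also have "\<dots> = R powr 4 * R powr (\<theta> - 4)" by (rule powr_add)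
    also have "R powr 4 = R ^ 4" using powr_realpow[of R 4] R1 by simp
    finally show ?thesis .
  qed
  then have Rth: "R powr \<theta> \<ge> R ^ 4 * (C/c + 1)"
    using Rp R1 by (simp add: mult_left_mono)
  have "\<Phi> R \<ge> c * R powr \<theta>"
    using PhiR bp R1 by (simp add: c_def powr_mult algebra_simps)
  moreover have "c * R powr \<theta> \<ge> c * (R ^ 4 * (C/c + 1))" using Rth cp by (simp add: mult_left_mono)
  moreover have "c * (R ^ 4 * (C/c + 1)) = R^4 * (C + c)" using cp by (simp add: field_simps)
  ultimately have PhiR2: "\<Phi> R \<ge> R^4 * (C + c)" by linarith
  have "Mhat (2 * AA * R\<^sup>2) \<le> M 1 * (1 + 2 * AA * R\<^sup>2) * (2 * AA * R\<^sup>2)"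
    using AA_pos by (intro Mhat_upper) simp
  also have "\<dots> \<le> M 1 * ((1 + 2 * AA) * R\<^sup>2) * (2 * AA * R\<^sup>2)"
  proof -
    have "1 \<le> R\<^sup>2" using R1 by (simp add: one_le_power)
    then have "1 + 2 * AA * R\<^sup>2 \<le> (1 + 2 * AA) * R\<^sup>2" by (simp add: algebra_simps)
    then show ?thesis using M1 AA_pos by (intro mult_right_mono mult_left_mono) auto
  qed
  also have "\<dots> = 4 * C * R ^ 4" by (simp add: C_def power2_eq_square power4_eq_xxxx algebra_simps)
  finally have "Mhat (2 * AA * R\<^sup>2) / 4 \<le> C * R ^ 4" by simp
  then have "\<psi> R \<le> C * R^4 - R^4 * (C + c)" using PhiR2 by (simp add: \<psi>_def)
  also have "\<dots> = - c * R^4" by (simp add: algebra_simps)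
  also have "\<dots> < 0" using cp R1 by simp
  finally show ?thesis using R1 by blast
qed

lemma psi_deriv: "s > 0 \<Longrightarrow> (\<psi> has_real_derivative (M (2 * AA * s\<^sup>2) * AA * s - \<Phi>' s)) (at s)"
proof -
  assume s: "s > 0"
  have N: "2 * AA * s\<^sup>2 > 0" using s AA_pos by simp
  have d1: "((\<lambda>s. 2 * AA * s\<^sup>2) has_real_derivative 2 * AA * (2 * s)) (at s)"
    by (auto intro!: derivative_eq_intros)
  have "((\<lambda>s. Mhat (2 * AA * s\<^sup>2) / 4 - \<Phi> s) has_real_derivative
          (M (2 * AA * s\<^sup>2) * (2 * AA * (2 * s))) / 4 - \<Phi>' s) (at s)"
    by (intro DERIV_diff DERIV_cdivide DERIV_chain2[OF Mhat_deriv_at[OF N] d1] Phi_deriv)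
  then show ?thesis unfolding \<psi>_def[abs_def] by (simp add: algebra_simps)
qed

lemma crit: "\<exists>s>0. M (2 * AA * s\<^sup>2) * AA * s = \<Phi>' s"
proof -
  obtain s0 where s0: "s0 > 0" "\<psi> s0 > 0" using psi_small by blast
  obtain R where R: "R > s0" "\<psi> R < 0" using psi_large by blast
  have cpsi: "continuous_on {0..R} \<psi>"
  proof -
    have "continuous_on {0..R} (\<lambda>s. Mhat (2 * AA * s\<^sup>2))"
      by (rule continuous_on_compose2[OF Mhat_cont]) (use AA_pos in \<open>auto intro!: continuous_intros\<close>)
    then show ?thesis unfolding \<psi>_def[abs_def]
      by (intro continuous_intros continuous_on_subset[OF Phi_cont]) auto
  qed
  obtain s where s: "s \<in> {0..R}" "\<And>y. y \<in> {0..R} \<Longrightarrow> \<psi> y \<le> \<psi> s"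
    using continuous_attains_sup[OF compact_Icc _ cpsi] R s0 by auto
  have "\<psi> s \<ge> \<psi> s0" using s R s0 by auto
  have p0: "\<psi> 0 = 0" by (simp add: \<psi>_def Mhat_0 Phi_0)
  have sne0: "s \<noteq> 0" using \<open>\<psi> s \<ge> \<psi> s0\<close> s0 p0 by auto
  have sneR: "s \<noteq> R" using \<open>\<psi> s \<ge> \<psi> s0\<close> s0 R by auto
  have sp: "0 < s" "s < R" using s sne0 sneR by auto
  have "M (2 * AA * s\<^sup>2) * AA * s - \<Phi>' s = 0"
  proof (rule DERIV_local_max[OF psi_deriv[OF sp(1)]])
    show "0 < min s (R - s)" using sp by simp
    show "\<forall>y. \<bar>s - y\<bar> < min s (R - s) \<longrightarrow> \<psi> y \<le> \<psi> s"
    proof (intro allI impI)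
      fix y assume "\<bar>s - y\<bar> < min s (R - s)"
      then have "y \<in> {0..R}" by (auto simp: abs_less_iff)
      then show "\<psi> y \<le> \<psi> s" by (rule s(2))
    qed
  qed
  then show ?thesis using sp by auto
qed

lemma dJ_uu:
  assumes s: "s > 0"
  shows "((\<lambda>t. Jfun Mhat F (\<lambda>x. uu s s x + t * uu \<gamma> \<delta> x)) has_real_derivative
           (\<gamma> + \<delta>) * (M (2 * AA * s\<^sup>2) * AA * s - \<Phi>' s)) (at 0)"
proof -
  have eq: "(\<lambda>t. Jfun Mhat F (\<lambda>x. uu s s x + t * uu \<gamma> \<delta> x)) =
        (\<lambda>t. Mhat (((s + t * \<gamma>)\<^sup>2 + (s + t * \<delta>)\<^sup>2) * AA) / 2 - (\<Phi> (s + t * \<gamma>) + \<Phi> (s + t * \<delta>)))"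
    by (simp add: uu_lin Jfun_uu)
  have N: "((s + 0 * \<gamma>)\<^sup>2 + (s + 0 * \<delta>)\<^sup>2) * AA > 0" using s AA_pos by simp
  have d1: "((\<lambda>t. ((s + t * \<gamma>)\<^sup>2 + (s + t * \<delta>)\<^sup>2) * AA) has_real_derivative
              (2 * (s + 0 * \<gamma>) * \<gamma> + 2 * (s + 0 * \<delta>) * \<delta>) * AA) (at 0)"
    by (auto intro!: derivative_eq_intros simp: algebra_simps)
  have d2: "((\<lambda>t. s + t * \<gamma>) has_real_derivative \<gamma>) (at 0)" by (auto intro!: derivative_eq_intros)
  have d3: "((\<lambda>t. s + t * \<delta>) has_real_derivative \<delta>) (at 0)" by (auto intro!: derivative_eq_intros)
  have "((\<lambda>t. Mhat (((s + t * \<gamma>)\<^sup>2 + (s + t * \<delta>)\<^sup>2) * AA) / 2 - (\<Phi> (s + t * \<gamma>) + \<Phi> (s + t * \<delta>)))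
        has_real_derivative
        M (((s + 0 * \<gamma>)\<^sup>2 + (s + 0 * \<delta>)\<^sup>2) * AA) * ((2 * (s + 0 * \<gamma>) * \<gamma> + 2 * (s + 0 * \<delta>) * \<delta>) * AA) / 2
          - (\<Phi>' (s + 0 * \<gamma>) * \<gamma> + \<Phi>' (s + 0 * \<delta>) * \<delta>)) (at 0)"
    by (intro DERIV_diff DERIV_cdivide DERIV_add DERIV_chain2[OF Mhat_deriv_at[OF N] d1]
        DERIV_chain2[OF Phi_deriv d2] DERIV_chain2[OF Phi_deriv d3])
  moreover have "M (((s + 0 * \<gamma>)\<^sup>2 + (s + 0 * \<delta>)\<^sup>2) * AA) * ((2 * (s + 0 * \<gamma>) * \<gamma> + 2 * (s + 0 * \<delta>) * \<delta>) * AA) / 2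
          - (\<Phi>' (s + 0 * \<gamma>) * \<gamma> + \<Phi>' (s + 0 * \<delta>) * \<delta>) =
        (\<gamma> + \<delta>) * (M (2 * AA * s\<^sup>2) * AA * s - \<Phi>' s)"
    by (simp add: power2_eq_square algebra_simps)
  ultimately show ?thesis unfolding eq by simp
qed

lemma Mset_ne: "Mset \<Omega>1 \<Omega>2 Mhat F \<noteq> {}"
proof -
  obtain s where s: "s > 0" and cs: "M (2 * AA * s\<^sup>2) * AA * s = \<Phi>' s" using crit by blast
  have dz: "dJ_zero Mhat F (uu s s) (uu \<gamma> \<delta>)" for \<gamma> \<delta>
    unfolding dJ_zero_def using dJ_uu[OF s, of \<gamma> \<delta>] cs by simp
  have "uu s s \<in> Mset \<Omega>1 \<Omega>2 Mhat F"
    unfolding Mset_def nehari_def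
    using H10_uu nonzero_uu1[of s s] nonzero_uu1[of s 0] nonzero_uu2[of s 0] s dz
    by (simp add: restr1 restr2)
  then show ?thesis by blast
qed

end

theorem corollary2p2:
  fixes \<Omega>1 \<Omega>2 :: "(real^3) set"
    and M Mhat M' :: "real \<Rightarrow> real"
    and f F :: "real \<Rightarrow> real"
    and m0 \<theta> :: real
  assumes open1: "open \<Omega>1" and open2: "open \<Omega>2"
    and bdd1: "bounded \<Omega>1" and bdd2: "bounded \<Omega>2"
    and disj: "\<Omega>1 \<inter> \<Omega>2 = {}"
    and dist_pos: "setdist \<Omega>1 \<Omega>2 > 0"
    and M_nonneg: "\<forall>t\<ge>0. M t \<ge> 0"
    and M_C1: "continuous_on {0..} M'"
    and M_deriv: "\<forall>t\<ge>0. (M has_real_derivative M' t) (at t within {0..})"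
    and M1_mono: "mono_on {0..} M"
    and M1_0: "M 0 = m0" and m0_pos: "m0 > 0"
    and M2: "\<forall>s t. 0 < s \<and> s < t \<longrightarrow> M t / t < M s / s"
    and Mhat_0: "Mhat 0 = 0"
    and Mhat_deriv: "\<forall>t\<ge>0. (Mhat has_real_derivative M t) (at t within {0..})"
    and f_cont: "continuous_on UNIV f"
    and F_0: "F 0 = 0"
    and F_deriv: "\<forall>s. (F has_real_derivative f s) (at s)"
    and f1: "((\<lambda>s. f s / s) \<longlongrightarrow> 0) (at 0)"
    and f2: "((\<lambda>s. f s / s ^ 5) \<longlongrightarrow> 0) at_infinity"
    and f3: "\<theta> > 4" "\<forall>s. s \<noteq> 0 \<longrightarrow> 0 < \<theta> * F s \<and> \<theta> * F s \<le> s * f s"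
    and f4_pos: "\<forall>s t. 0 < s \<and> s < t \<longrightarrow> f s / s ^ 3 < f t / t ^ 3"
    and f4_neg: "\<forall>s t. s < t \<and> t < 0 \<longrightarrow> f t / t ^ 3 < f s / s ^ 3"
  shows "Mset \<Omega>1 \<Omega>2 Mhat F \<noteq> {}"

proof -
  have ne1: "\<Omega>1 \<noteq> {}" using dist_pos by (auto simp: setdist_empty1)
  have ne2: "\<Omega>2 \<noteq> {}" using dist_pos by (auto simp: setdist_empty2)
  obtain c1 where c1: "c1 \<in> \<Omega>1" using ne1 by blast
  obtain c2 where c2: "c2 \<in> \<Omega>2" using ne2 by blast
  obtain e1 where e1: "e1 > 0" "ball c1 e1 \<subseteq> \<Omega>1" using open1 c1 by (meson openE)
  obtain e2 where e2: "e2 > 0" "ball c2 e2 \<subseteq> \<Omega>2" using open2 c2 by (meson openE)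
  define e where "e = min e1 e2 / 2"
  have ep: "e > 0" using e1 e2 by (simp add: e_def)
  have s1: "cball c1 e \<subseteq> \<Omega>1"
  proof -
    have "cball c1 e \<subseteq> ball c1 e1" using e1 e2 by (auto simp: e_def subset_iff)
    then show ?thesis using e1 by blast
  qed
  have s2: "cball c2 e \<subseteq> \<Omega>2"
  proof -
    have "cball c2 e \<subseteq> ball c2 e2" using e1 e2 by (auto simp: e_def subset_iff)
    then show ?thesis using e2 by blast
  qed
  have Fc: "continuous_on UNIV F"
    using F_deriv by (intro continuous_at_imp_continuous_on ballI DERIV_isCont) auto
  interpret setting2 c1 c2 e \<Omega>1 \<Omega>2 F f M Mhat m0 \<theta>
    by unfold_locales (use ep s1 s2 disj Fc F_0 Mhat_0 Mhat_deriv M_nonneg M1_mono M1_0 m0_pos M2 F_deriv f_cont f1 f3 in auto)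
  show ?thesis by (rule Mset_ne)
qed

end
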